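(* Let $G$ be a 2-connected graph, $S$ an SPQR-tree of $G$, and $(B_a:a\in V(T))$ a tree decomposition of $G$ obtained from $S$ by the construction described in the context. Let $v\in V(G)$ and let $h\ge 1$ be an integer. If $T[v]$ has pathwidth greater than $2^{2h+1}-3$, then $S[v]$ contains a subdivision of $T_h$.
   Context: SPQR-tree. For a 2-connected graph $G$, an SPQR-tree $S$ is a tree whose nodes $a$ are each of type S, P or R and carry a multigraph $H_a$ whose edges are classified as real or virtual, defined recursively: (i) if $G$ is a cycle, $S$ is a single S-node $a$ with $H_a=G$, all edges real; (ii) if $G$ is 3-connected, $S$ is a single R-node $a$ with $H_a=G$, all edges real; (iii) otherwise $G$ has a cutset $\{x,y\}$ with $x,y$ of degree at least 3; let $C_1,\dots,C_r$ ($r\ge2$) be the components of $G-\{x,y\}$ and let $\tilde G_i$ be $G[V(C_i)\cup\{x,y\}]$ plus the edge $xy$ if absent (treated as real); let $S_i$ be an SPQR-tree of $\tilde G_i$, and let $a_i$ be the unique node of $S_i$ in which $xy$ is a real edge of $H_{a_i}$. Then $S$ is formed from $S_1,\dots,S_r$ by adding a P-node $a$ with $H_a$ the dipole on $\{x,y\}$ with $r$ virtual edges $xy$ plus a real edge $xy$ if $xy\in E(G)$, making $a$ adjacent to each $a_i$, and reclassifying $xy$ as virtual in each $H_{a_i}$. For $v\in V(G)$, $S[v]$ is the subtree of $S$ induced by the nodes $a$ with $v\in V(H_a)$. Construction of $T$. For each S- or R-node $a$ of $S$ fix a minimum-width path decomposition $(B_c:c\in V(P_a))$ of $H_a$ indexed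 by a path $P_a$. The tree $T$ has as nodes the nodes of all paths $P_a$ (with their path edges) and the P-nodes of $S$; for each P-node $b$ of $S$ with $V(H_b)=\{x,y\}$ and each S- or R-node neighbour $a$ of $b$ in $S$, add to $T$ an edge between $b$ and one node $c$ of $P_a$ with $x,y\in B_c$. The bag of a P-node $b$ is $B_b=V(H_b)$. For $v\in V(G)$, $T[v]$ is the subtree of $T$ induced by the nodes whose bags contain $v$. $T_h$ is the complete binary tree of height $h$ (every non-leaf vertex has two children, all leaves at distance $h$ from the root). Pathwidth is the minimum width (maximum bag size minus 1) of a path decomposition. *)

theory Defs
  imports Main "HOL-Library.Multiset"
begin

definition graph :: "'v set \<Rightarrow> 'v set set \<Rightarrow> bool" where
  "graph V E \<longleftrightarrow> finite V \<and> (\<forall>e\<in>E. \<exists>u w. e = {u, w} \<and> u \<noteq> w \<and> u \<in> V \<and> w \<in> V)"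

definition induced_edges :: "'v set set \<Rightarrow> 'v set \<Rightarrow> 'v set set" where
  "induced_edges E W = {e \<in> E. e \<subseteq> W}"

definition degree :: "'v set set \<Rightarrow> 'v \<Rightarrow> nat" where
  "degree E u = card {e \<in> E. u \<in> e}"

definition adjrel :: "'v set \<Rightarrow> 'v set set \<Rightarrow> ('v \<times> 'v) set" where
  "adjrel W E = {(u, w). {u, w} \<in> E \<and> u \<in> W \<and> w \<in> W}"

definition connected_graph :: "'v set \<Rightarrow> 'v set set \<Rightarrow> bool" where
  "connected_graph W E \<longleftrightarrow> W \<noteq> {} \<and> (\<forall>u\<in>W. \<forall>w\<in>W. (u, w) \<in> (adjrel W E)\<^sup>*)"

definition components :: "'v set \<Rightarrow> 'v set set \<Rightarrow> 'v set set" where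
  "components W E = {{w \<in> W. (u, w) \<in> (adjrel W E)\<^sup>*} | u. u \<in> W}"

definition k_connected :: "nat \<Rightarrow> 'v set \<Rightarrow> 'v set set \<Rightarrow> bool" where
  "k_connected k V E \<longleftrightarrow> graph V E \<and> card V > k \<and>
     (\<forall>X \<subseteq> V. card X < k \<longrightarrow> connected_graph (V - X) (induced_edges E (V - X)))"

definition is_cycle :: "'v set \<Rightarrow> 'v set set \<Rightarrow> bool" where
  "is_cycle V E \<longleftrightarrow> graph V E \<and> card V \<ge> 3 \<and> connected_graph V E \<and> (\<forall>u\<in>V. degree E u = 2)"

definition is_path :: "'v set \<Rightarrow> 'v set set \<Rightarrow> 'v list \<Rightarrow> bool" where
  "is_path V E ps \<longleftrightarrow> ps \<noteq> [] \<and> distinct ps \<and> set ps \<subseteq> V \<and>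
     (\<forall>i. Suc i < length ps \<longrightarrow> {ps ! i, ps ! Suc i} \<in> E)"

definition contains_subdivision ::
  "'a set \<Rightarrow> 'a set set \<Rightarrow> 'b set \<Rightarrow> 'b set set \<Rightarrow> bool" where
  "contains_subdivision VH EH VG EG \<longleftrightarrow>
     (\<exists>(\<phi> :: 'a \<Rightarrow> 'b) (P :: 'a set \<Rightarrow> 'b list).
        inj_on \<phi> VH \<and> \<phi> ` VH \<subseteq> VG \<and>
        (\<forall>e\<in>EH. is_path VG EG (P e) \<and> {hd (P e), last (P e)} = \<phi> ` e \<and>
                  set (butlast (tl (P e))) \<inter> \<phi> ` VH = {}) \<and>
        (\<forall>e\<in>EH. \<forall>e'\<in>EH. e \<noteq> e' \<longrightarrow>
                  set (butlast (tl (P e))) \<inter> set (butlast (tl (P e'))) = {}))"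

text \<open>Complete binary tree of height h: vertices are 0/1-words of length at most h
  (the root is the empty word), a word xs has children b # xs.\<close>
definition cbt_verts :: "nat \<Rightarrow> bool list set" where
  "cbt_verts h = {xs. length xs \<le> h}"

definition cbt_edges :: "nat \<Rightarrow> bool list set set" where
  "cbt_edges h = {{xs, b # xs} | xs b. length xs < h}"

definition is_path_decomp :: "'v set \<Rightarrow> 'v set set \<Rightarrow> 'v set list \<Rightarrow> bool" where
  "is_path_decomp V E bs \<longleftrightarrow> bs \<noteq> [] \<and> (\<forall>B\<in>set bs. B \<subseteq> V) \<and>
     (\<forall>u\<in>V. \<exists>i<length bs. u \<in> bs ! i) \<and>
     (\<forall>e\<in>E. \<exists>i<length bs. e \<subseteq> bs ! i) \<and>
     (\<forall>u i j k. i \<le> j \<and> j \<le> k \<and> k < length bs \<and> u \<in> bs ! i \<and> u \<in> bs ! k \<longrightarrow> u \<in> bs ! j)"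

definition pd_width :: "'v set list \<Rightarrow> nat" where
  "pd_width bs = Max (card ` set bs) - 1"

definition pathwidth :: "'v set \<Rightarrow> 'v set set \<Rightarrow> nat" where
  "pathwidth V E = (LEAST w. \<exists>bs. is_path_decomp V E bs \<and> pd_width bs = w)"

datatype nodetype = SNode | PNode | RNode

text \<open>An SPQR-tree: nodes (of type 'n), tree edges, node types, and for each node a
  multigraph H_a given by its vertex set and multisets of real and virtual edges.\<close>
record ('n, 'v) spqr =
  nodes :: "'n set"
  tedges :: "'n set set"
  ntype :: "'n \<Rightarrow> nodetype"
  hverts :: "'n \<Rightarrow> 'v set"
  hreal :: "'n \<Rightarrow> 'v set multiset"
  hvirt :: "'n \<Rightarrow> 'v set multiset"

inductive is_spqr_tree :: "'v set \<Rightarrow> 'v set set \<Rightarrow> ('n, 'v) spqr \<Rightarrow> bool" where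
  cycle: "\<lbrakk> is_cycle V E; nodes S = {a}; tedges S = {}; ntype S a = SNode;
            hverts S a = V; hreal S a = mset_set E; hvirt S a = {#} \<rbrakk>
          \<Longrightarrow> is_spqr_tree V E S"
| rigid: "\<lbrakk> k_connected 3 V E; nodes S = {a}; tedges S = {}; ntype S a = RNode;
            hverts S a = V; hreal S a = mset_set E; hvirt S a = {#} \<rbrakk>
          \<Longrightarrow> is_spqr_tree V E S"
| split: "\<lbrakk> graph V E; \<not> is_cycle V E; \<not> k_connected 3 V E;
            x \<in> V; y \<in> V; x \<noteq> y; degree E x \<ge> 3; degree E y \<ge> 3;
            Cs = components (V - {x, y}) (induced_edges E (V - {x, y}));
            card Cs \<ge> 2;
            \<forall>C\<in>Cs. is_spqr_tree (C \<union> {x, y}) (induced_edges E (C \<union> {x, y}) \<union> {{x, y}}) (Sub C);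
            \<forall>C\<in>Cs. aC C \<in> nodes (Sub C) \<and> {x, y} \<in># hreal (Sub C) (aC C) \<and>
                    (\<forall>a'\<in>nodes (Sub C). {x, y} \<in># hreal (Sub C) a' \<longrightarrow> a' = aC C);
            \<forall>C\<in>Cs. \<forall>D\<in>Cs. C \<noteq> D \<longrightarrow> nodes (Sub C) \<inter> nodes (Sub D) = {};
            \<forall>C\<in>Cs. p \<notin> nodes (Sub C);
            nodes S = insert p (\<Union>C\<in>Cs. nodes (Sub C));
            tedges S = (\<Union>C\<in>Cs. tedges (Sub C)) \<union> {{p, aC C} | C. C \<in> Cs};
            ntype S p = PNode; hverts S p = {x, y};
            hreal S p = (if {x, y} \<in> E then {#{x, y}#} else {#});
            hvirt S p = replicate_mset (card Cs) {x, y};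
            \<forall>C\<in>Cs. \<forall>a\<in>nodes (Sub C).
               ntype S a = ntype (Sub C) a \<and> hverts S a = hverts (Sub C) a \<and>
               hreal S a = (if a = aC C then hreal (Sub C) a - {#{x, y}#} else hreal (Sub C) a) \<and>
               hvirt S a = (if a = aC C then add_mset {x, y} (hvirt (Sub C) a) else hvirt (Sub C) a) \<rbrakk>
          \<Longrightarrow> is_spqr_tree V E S"

definition spqr_sub_verts :: "('n, 'v) spqr \<Rightarrow> 'v \<Rightarrow> 'n set" where
  "spqr_sub_verts S v = {a \<in> nodes S. v \<in> hverts S a}"

definition spqr_sub_edges :: "('n, 'v) spqr \<Rightarrow> 'v \<Rightarrow> 'n set set" where
  "spqr_sub_edges S v = induced_edges (tedges S) (spqr_sub_verts S v)"

text \<open>Parameters: pd a is the chosen path decomposition (bags B_c, c = 0..length-1 along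
  the path P_a) of H_a for each S- or R-node a; att b a is the index of the node of P_a
  to which the P-node b is attached.  Nodes of T: Inl (a, i) is the i-th node of P_a,
  Inr b is the P-node b.\<close>
definition spqr_td :: "('n, 'v) spqr \<Rightarrow> ('n \<Rightarrow> 'v set list) \<Rightarrow> ('n \<Rightarrow> 'n \<Rightarrow> nat) \<Rightarrow> bool" where
  "spqr_td S pd att \<longleftrightarrow>
     (\<forall>a\<in>nodes S. ntype S a \<noteq> PNode \<longrightarrow>
        (let HV = hverts S a; HE = set_mset (hreal S a + hvirt S a) in
          is_path_decomp HV HE (pd a) \<and> pd_width (pd a) = pathwidth HV HE)) \<and>
     (\<forall>b\<in>nodes S. ntype S b = PNode \<longrightarrow>
        (\<forall>a\<in>nodes S. {a, b} \<in> tedges S \<and> ntype S a \<noteq> PNode \<longrightarrow>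
           att b a < length (pd a) \<and> hverts S b \<subseteq> pd a ! att b a))"

definition T_verts :: "('n, 'v) spqr \<Rightarrow> ('n \<Rightarrow> 'v set list) \<Rightarrow> ('n \<times> nat + 'n) set" where
  "T_verts S pd = {Inl (a, i) | a i. a \<in> nodes S \<and> ntype S a \<noteq> PNode \<and> i < length (pd a)}
                  \<union> {Inr b | b. b \<in> nodes S \<and> ntype S b = PNode}"

definition T_edges :: "('n, 'v) spqr \<Rightarrow> ('n \<Rightarrow> 'v set list) \<Rightarrow> ('n \<Rightarrow> 'n \<Rightarrow> nat) \<Rightarrow> ('n \<times> nat + 'n) set set" where
  "T_edges S pd att =
     {{Inl (a, i), Inl (a, Suc i)} | a i. a \<in> nodes S \<and> ntype S a \<noteq> PNode \<and> Suc i < length (pd a)}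
   \<union> {{Inr b, Inl (a, att b a)} | a b. a \<in> nodes S \<and> b \<in> nodes S \<and> ntype S b = PNode \<and>
          ntype S a \<noteq> PNode \<and> {a, b} \<in> tedges S}"

definition T_bag :: "('n, 'v) spqr \<Rightarrow> ('n \<Rightarrow> 'v set list) \<Rightarrow> ('n \<times> nat + 'n) \<Rightarrow> 'v set" where
  "T_bag S pd t = (case t of Inl (a, i) \<Rightarrow> pd a ! i | Inr b \<Rightarrow> hverts S b)"

definition T_sub_verts :: "('n, 'v) spqr \<Rightarrow> ('n \<Rightarrow> 'v set list) \<Rightarrow> 'v \<Rightarrow> ('n \<times> nat + 'n) set" where
  "T_sub_verts S pd v = {t \<in> T_verts S pd. v \<in> T_bag S pd t}"

definition T_sub_edges :: "('n, 'v) spqr \<Rightarrow> ('n \<Rightarrow> 'v set list) \<Rightarrow> ('n \<Rightarrow> 'n \<Rightarrow> nat) \<Rightarrow> 'v \<Rightarrow> ('n \<times> nat + 'n) set set" where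
  "T_sub_edges S pd att v = induced_edges (T_edges S pd att) (T_sub_verts S pd v)"

end

theory Submission
  imports Defs
begin

definition cnt :: "'t set \<Rightarrow> ('t \<Rightarrow> nat) \<Rightarrow> ('t \<Rightarrow> nat) \<Rightarrow> nat \<Rightarrow> nat" where
 "cnt Y l r t = card {u\<in>Y. l u \<le> t \<and> t \<le> r u}"
definition lay :: "'t set \<Rightarrow> nat \<Rightarrow> ('t \<Rightarrow> nat) \<Rightarrow> ('t \<Rightarrow> nat) \<Rightarrow> bool" where
 "lay Y n l r \<longleftrightarrow> finite Y \<and> 0 < n \<and> (\<forall>u\<in>Y. l u \<le> r u \<and> r u < n)"
definition eok :: "'t set set \<Rightarrow> 't set \<Rightarrow> ('t \<Rightarrow> nat) \<Rightarrow> ('t \<Rightarrow> nat) \<Rightarrow> bool" where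
 "eok E Y l r \<longleftrightarrow> (\<forall>e\<in>E. e \<subseteq> Y \<longrightarrow> (\<exists>t. \<forall>u\<in>e. l u \<le> t \<and> t \<le> r u))"

definition insl :: "'t set \<Rightarrow> ('t \<Rightarrow> nat) \<Rightarrow> nat \<Rightarrow> nat \<Rightarrow> ('t \<Rightarrow> nat) \<Rightarrow> 't \<Rightarrow> nat" where
 "insl Y1 l1 \<tau> n2 l2 u = (if u \<in> Y1 then (if l1 u \<le> \<tau> then l1 u else l1 u + n2) else l2 u + \<tau> + 1)"
definition insr :: "'t set \<Rightarrow> ('t \<Rightarrow> nat) \<Rightarrow> nat \<Rightarrow> nat \<Rightarrow> 't set \<Rightarrow> ('t \<Rightarrow> nat) \<Rightarrow> 't \<Rightarrow> nat" where
 "insr Y1 r1 \<tau> n2 P r2 u = (if u \<in> Y1 then (if \<tau> < r1 u then r1 u + n2 else if u \<in> P \<and> r1 u = \<tau> then \<tau>+1 else r1 u) else r2 u + \<tau> + 1)"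

lemma cnt_le_card: "finite Y \<Longrightarrow> cnt Y l r t \<le> card Y"
  unfolding cnt_def by (rule card_mono) auto

context
  fixes Y1 Y2 :: "'t set" and n1 n2 \<tau> :: nat and l1 r1 l2 r2 :: "'t \<Rightarrow> nat" and P :: "'t set"
  assumes L1: "lay Y1 n1 l1 r1" and L2: "lay Y2 n2 l2 r2" and tau: "\<tau> < n1" and disj: "Y1 \<inter> Y2 = {}"
begin

abbreviation "LL \<equiv> insl Y1 l1 \<tau> n2 l2"
abbreviation "RR \<equiv> insr Y1 r1 \<tau> n2 P r2"

lemma ins_lay: "lay (Y1 \<union> Y2) (n1 + n2) LL RR"
  using L1 L2 tau unfolding lay_def insl_def insr_def by auto

lemma ins_alive1: "u \<in> Y1 \<Longrightarrow> l1 u \<le> t \<Longrightarrow> t \<le> r1 u \<Longrightarrow>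
   LL u \<le> (if t \<le> \<tau> then t else t + n2) \<and> (if t \<le> \<tau> then t else t + n2) \<le> RR u"
  unfolding insl_def insr_def by auto

lemma ins_alive2: "u \<in> Y2 \<Longrightarrow> l2 u \<le> t \<Longrightarrow> t \<le> r2 u \<Longrightarrow>
   LL u \<le> t + \<tau> + 1 \<and> t + \<tau> + 1 \<le> RR u"
  using disj unfolding insl_def insr_def by auto

lemma ins_eok:
  assumes E1: "eok E Y1 l1 r1" and E2: "eok E Y2 l2 r2"
    and cross: "\<forall>e\<in>E. e \<subseteq> Y1 \<union> Y2 \<longrightarrow> e \<subseteq> Y1 \<or> e \<subseteq> Y2 \<or>
        (\<exists>p q. e = {p, q} \<and> p \<in> P \<and> p \<in> Y1 \<and> l1 p \<le> \<tau> \<and> \<tau> \<le> r1 p \<and> q \<in> Y2 \<and> l2 q = 0)"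
  shows "eok E (Y1 \<union> Y2) LL RR"
  unfolding eok_def
proof (intro ballI impI)
  fix e assume e: "e \<in> E" "e \<subseteq> Y1 \<union> Y2"
  from cross e consider "e \<subseteq> Y1" | "e \<subseteq> Y2" |
    "(\<exists>p q. e = {p, q} \<and> p \<in> P \<and> p \<in> Y1 \<and> l1 p \<le> \<tau> \<and> \<tau> \<le> r1 p \<and> q \<in> Y2 \<and> l2 q = 0)"
    by blast
  then show "\<exists>t. \<forall>u\<in>e. LL u \<le> t \<and> t \<le> RR u"
  proof cases
    case 1
    with E1 e obtain t where t: "\<forall>u\<in>e. l1 u \<le> t \<and> t \<le> r1 u" unfolding eok_def by blast
    show ?thesis
      by (rule exI[of _ "if t \<le> \<tau> then t else t + n2"]) (use t 1 ins_alive1 in blast)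
  next
    case 2
    with E2 e obtain t where t: "\<forall>u\<in>e. l2 u \<le> t \<and> t \<le> r2 u" unfolding eok_def by blast
    show ?thesis
      by (rule exI[of _ "t + \<tau> + 1"]) (use t 2 ins_alive2 in blast)
  next
    case 3
    then obtain p q where pq: "e = {p, q}" "p \<in> P" "p \<in> Y1" "l1 p \<le> \<tau>" "\<tau> \<le> r1 p" "q \<in> Y2" "l2 q = 0"
      by blast
    have "q \<notin> Y1" using disj pq by blast
    then show ?thesis
      using pq L2 unfolding insl_def insr_def lay_def
      by (intro exI[of _ "\<tau> + 1"]) auto
  qed
qed

lemma ins_cnt_lo: "t \<le> \<tau> \<Longrightarrow> cnt (Y1 \<union> Y2) LL RR t = cnt Y1 l1 r1 t"
  unfolding cnt_def
proof -
  assume t: "t \<le> \<tau>"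
  have "{u \<in> Y1 \<union> Y2. LL u \<le> t \<and> t \<le> RR u} = {u \<in> Y1. l1 u \<le> t \<and> t \<le> r1 u}"
    using t disj unfolding insl_def insr_def by auto
  then show "card {u \<in> Y1 \<union> Y2. LL u \<le> t \<and> t \<le> RR u} = card {u \<in> Y1. l1 u \<le> t \<and> t \<le> r1 u}"
    by simp
qed

lemma ins_cnt_hi: "\<tau> + n2 < t \<Longrightarrow> cnt (Y1 \<union> Y2) LL RR t = cnt Y1 l1 r1 (t - n2)"
  unfolding cnt_def
proof -
  assume t: "\<tau> + n2 < t"
  have "{u \<in> Y1 \<union> Y2. LL u \<le> t \<and> t \<le> RR u} = {u \<in> Y1. l1 u \<le> t - n2 \<and> t - n2 \<le> r1 u}"
    using t disj L2 unfolding insl_def insr_def lay_def by auto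
  then show "card {u \<in> Y1 \<union> Y2. LL u \<le> t \<and> t \<le> RR u} = card {u \<in> Y1. l1 u \<le> t - n2 \<and> t - n2 \<le> r1 u}"
    by simp
qed

lemma ins_cnt_mid:
  assumes t: "t' < n2"
  shows "cnt (Y1 \<union> Y2) LL RR (\<tau> + 1 + t') \<le>
     card ({u\<in>Y1. l1 u \<le> \<tau> \<and> \<tau> < r1 u} \<union> (if t' = 0 then {u\<in>Y1. u \<in> P \<and> l1 u \<le> \<tau> \<and> r1 u = \<tau>} else {}))
     + cnt Y2 l2 r2 t'"
proof -
  let ?A = "{u\<in>Y1. l1 u \<le> \<tau> \<and> \<tau> < r1 u} \<union> (if t' = 0 then {u\<in>Y1. u \<in> P \<and> l1 u \<le> \<tau> \<and> r1 u = \<tau>} else {})"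
  let ?B = "{u\<in>Y2. l2 u \<le> t' \<and> t' \<le> r2 u}"
  have sub: "{u \<in> Y1 \<union> Y2. LL u \<le> \<tau> + 1 + t' \<and> \<tau> + 1 + t' \<le> RR u} \<subseteq> ?A \<union> ?B"
    using disj t unfolding insl_def insr_def by (auto split: if_splits)
  have fin: "finite (?A \<union> ?B)" using L1 L2 unfolding lay_def by auto
  have "cnt (Y1 \<union> Y2) LL RR (\<tau> + 1 + t') \<le> card (?A \<union> ?B)"
    unfolding cnt_def by (rule card_mono[OF fin sub])
  also have "\<dots> \<le> card ?A + card ?B" by (rule card_Un_le)
  finally show ?thesis unfolding cnt_def by simp
qed

lemma ins_cnt_mid_light:
  assumes t: "t' < n2"
  shows "cnt (Y1 \<union> Y2) LL RR (\<tau> + 1 + t') \<le> cnt Y1 l1 r1 \<tau> + cnt Y2 l2 r2 t'"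
proof -
  have "card ({u\<in>Y1. l1 u \<le> \<tau> \<and> \<tau> < r1 u} \<union> (if t' = 0 then {u\<in>Y1. u \<in> P \<and> l1 u \<le> \<tau> \<and> r1 u = \<tau>} else {}))
     \<le> cnt Y1 l1 r1 \<tau>"
    unfolding cnt_def using L1 unfolding lay_def by (intro card_mono) auto
  then show ?thesis using ins_cnt_mid[OF t] by linarith
qed

lemma ins_cnt_mid_end:
  assumes t: "t' < n2" and last: "\<tau> = n1 - 1" and fP: "finite P"
  shows "cnt (Y1 \<union> Y2) LL RR (\<tau> + 1 + t') \<le> (if t' = 0 then card P else 0) + cnt Y2 l2 r2 t'"
proof -
  have "{u\<in>Y1. l1 u \<le> \<tau> \<and> \<tau> < r1 u} = {}" using L1 last unfolding lay_def by auto
  note e = this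
  have B: "card (if t' = 0 then {u\<in>Y1. u \<in> P \<and> l1 u \<le> \<tau> \<and> r1 u = \<tau>} else {}) \<le> (if t' = 0 then card P else 0)"
    using fP by (auto intro: card_mono)
  have A: "cnt (Y1 \<union> Y2) LL RR (\<tau> + 1 + t') \<le> card (if t' = 0 then {u\<in>Y1. u \<in> P \<and> l1 u \<le> \<tau> \<and> r1 u = \<tau>} else {}) + cnt Y2 l2 r2 t'"
    using ins_cnt_mid[OF t] unfolding e Un_empty_left .
  show ?thesis using A B by linarith
qed

lemma ins_cnt_bound:
  assumes "\<And>t. t < n1 \<Longrightarrow> cnt Y1 l1 r1 t \<le> W"
    and "\<And>t'. t' < n2 \<Longrightarrow> cnt (Y1 \<union> Y2) LL RR (\<tau> + 1 + t') \<le> W"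
    and "t < n1 + n2"
  shows "cnt (Y1 \<union> Y2) LL RR t \<le> W"
proof -
  consider "t \<le> \<tau>" | "\<tau> < t \<and> t \<le> \<tau> + n2" | "\<tau> + n2 < t" by linarith
  then show ?thesis
  proof cases
    case 1 then show ?thesis using ins_cnt_lo assms(1) tau by simp
  next
    case 2
    define t' where "t' = t - \<tau> - 1"
    have tt: "t = \<tau> + 1 + t'" "t' < n2" using 2 unfolding t'_def by auto
    show ?thesis unfolding tt(1) using assms(2)[OF tt(2)] .
  next
    case 3 then show ?thesis using ins_cnt_hi assms(1,3) by simp
  qed
qed

end

locale forest =
  fixes N :: "'n set" and Q :: "'n set" and par :: "'n \<Rightarrow> 'n" and dep :: "'n \<Rightarrow> nat"
  assumes finN: "finite N" and QN: "Q \<subseteq> N"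
    and parN: "y \<in> Q \<Longrightarrow> par y \<in> N" and pardep: "y \<in> Q \<Longrightarrow> dep (par y) < dep y"
begin

definition R where "R = {(y, par y) | y. y \<in> Q}"
definition sub where "sub s = {t \<in> N. (t, s) \<in> R\<^sup>*}"
definition ch where "ch s = {c \<in> Q. par c = s}"
definition EdF where "EdF = {{y, par y} | y. y \<in> Q}"

lemma R_iff: "(a, b) \<in> R \<longleftrightarrow> a \<in> Q \<and> b = par a"
  unfolding R_def by auto

lemma sv: "single_valued R"
  unfolding single_valued_def R_def by auto

lemma R_dep: "(a, b) \<in> R\<^sup>* \<Longrightarrow> dep b \<le> dep a"
  by (induction rule: rtrancl_induct) (auto simp: R_iff dest: pardep)

lemma R_dep_tr: "(a, b) \<in> R\<^sup>+ \<Longrightarrow> dep b < dep a"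
  by (induction rule: trancl_induct) (auto simp: R_iff dest: pardep)

lemma R_N: "(a, b) \<in> R\<^sup>* \<Longrightarrow> a \<in> N \<Longrightarrow> b \<in> N"
  by (induction rule: rtrancl_induct) (auto simp: R_iff dest: parN)

lemma R_antisym: "(a, b) \<in> R\<^sup>* \<Longrightarrow> (b, a) \<in> R\<^sup>* \<Longrightarrow> a = b"
proof (rule ccontr)
  assume "(a, b) \<in> R\<^sup>*" "(b, a) \<in> R\<^sup>*" "a \<noteq> b"
  then have "(a, b) \<in> R\<^sup>+" by (simp add: rtrancl_eq_or_trancl)
  with \<open>(b, a) \<in> R\<^sup>*\<close> have "(a, a) \<in> R\<^sup>+" by simp
  then show False using R_dep_tr by fastforce
qed

lemma R_comp: "(y, a) \<in> R\<^sup>* \<Longrightarrow> (y, b) \<in> R\<^sup>* \<Longrightarrow> (a, b) \<in> R\<^sup>* \<or> (b, a) \<in> R\<^sup>*"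
  using single_valued_confluent[OF sv] by blast

lemma ch_Q: "c \<in> ch s \<Longrightarrow> c \<in> Q \<and> par c = s"
  unfolding ch_def by auto

lemma in_sub_self: "s \<in> N \<Longrightarrow> s \<in> sub s"
  unfolding sub_def by auto

lemma sub_N: "sub s \<subseteq> N" unfolding sub_def by auto

lemma sub_ch: "c \<in> ch s \<Longrightarrow> sub c \<subseteq> sub s"
  unfolding sub_def ch_def by (auto simp: R_iff intro: rtrancl_into_rtrancl)

lemma not_sub_ch: "c \<in> ch s \<Longrightarrow> s \<notin> sub c"
proof
  assume c: "c \<in> ch s" and "s \<in> sub c"
  then have "(s, c) \<in> R\<^sup>*" "(c, s) \<in> R" unfolding sub_def ch_def by (auto simp: R_iff)
  then have "c = s" using R_antisym by blast
  with c show False using pardep unfolding ch_def by fastforce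
qed

lemma sub_ch_disj: "c1 \<in> ch s \<Longrightarrow> c2 \<in> ch s \<Longrightarrow> c1 \<noteq> c2 \<Longrightarrow> sub c1 \<inter> sub c2 = {}"
proof (rule ccontr)
  assume c: "c1 \<in> ch s" "c2 \<in> ch s" "c1 \<noteq> c2" and "sub c1 \<inter> sub c2 \<noteq> {}"
  then obtain y where "(y, c1) \<in> R\<^sup>*" "(y, c2) \<in> R\<^sup>*" unfolding sub_def by auto
  then have "(c1, c2) \<in> R\<^sup>* \<or> (c2, c1) \<in> R\<^sup>*" by (rule R_comp)
  then show False
  proof
    assume "(c1, c2) \<in> R\<^sup>*"
    with c have "(c1, c2) \<in> R\<^sup>+" by (simp add: rtrancl_eq_or_trancl)
    then obtain z where "(c1, z) \<in> R" "(z, c2) \<in> R\<^sup>*" by (meson tranclD)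
    then have "(s, c2) \<in> R\<^sup>*" using c by (auto simp: R_iff ch_def)
    moreover have "(c2, s) \<in> R" using c by (auto simp: R_iff ch_def)
    ultimately have "s = c2" using R_antisym by blast
    then show False using c pardep unfolding ch_def by fastforce
  next
    assume "(c2, c1) \<in> R\<^sup>*"
    with c have "(c2, c1) \<in> R\<^sup>+" by (simp add: rtrancl_eq_or_trancl)
    then obtain z where "(c2, z) \<in> R" "(z, c1) \<in> R\<^sup>*" by (meson tranclD)
    then have "(s, c1) \<in> R\<^sup>*" using c by (auto simp: R_iff ch_def)
    moreover have "(c1, s) \<in> R" using c by (auto simp: R_iff ch_def)
    ultimately have "s = c1" using R_antisym by blast
    then show False using c pardep unfolding ch_def by fastforce
  qed
qed

lemma sub_decomp: "s \<in> N \<Longrightarrow> sub s = insert s (\<Union>c\<in>ch s. sub c)"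
proof
  assume s: "s \<in> N"
  show "sub s \<subseteq> insert s (\<Union>c\<in>ch s. sub c)"
  proof
    fix t assume t: "t \<in> sub s"
    show "t \<in> insert s (\<Union>c\<in>ch s. sub c)"
    proof (cases "t = s")
      case False
      with t have "(t, s) \<in> R\<^sup>+" "t \<in> N" unfolding sub_def by (auto simp: rtrancl_eq_or_trancl)
      then obtain c where "(t, c) \<in> R\<^sup>*" "(c, s) \<in> R" by (meson tranclD2)
      then show ?thesis using \<open>t \<in> N\<close> unfolding sub_def ch_def by (auto simp: R_iff)
    qed simp
  qed
  show "insert s (\<Union>c\<in>ch s. sub c) \<subseteq> sub s" using s sub_ch in_sub_self by blast
qed

lemma sub_par: "t \<in> sub c \<Longrightarrow> t \<noteq> c \<Longrightarrow> t \<in> Q \<and> par t \<in> sub c"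
proof -
  assume t: "t \<in> sub c" "t \<noteq> c"
  then have "(t, c) \<in> R\<^sup>+" "t \<in> N" unfolding sub_def by (auto simp: rtrancl_eq_or_trancl)
  then obtain z where "(t, z) \<in> R" "(z, c) \<in> R\<^sup>*" by (meson tranclD)
  then show ?thesis unfolding sub_def by (auto simp: R_iff dest: parN)
qed

lemma child_sub: "t \<in> Q \<Longrightarrow> par t \<in> sub c \<Longrightarrow> t \<in> sub c"
  unfolding sub_def using QN by (auto simp: R_iff intro: converse_rtrancl_into_rtrancl)

lemma root_exists: "t \<in> N \<Longrightarrow> \<exists>s\<in>N - Q. t \<in> sub s"
proof (induction "dep t" arbitrary: t rule: less_induct)
  case less
  show ?case
  proof (cases "t \<in> Q")
    case False then show ?thesis using less in_sub_self by blast
  next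
    case True
    then obtain s where "s \<in> N - Q" "par t \<in> sub s" using less pardep parN by blast
    then show ?thesis using child_sub True by blast
  qed
qed

lemma roots_disj: "s1 \<in> N - Q \<Longrightarrow> s2 \<in> N - Q \<Longrightarrow> s1 \<noteq> s2 \<Longrightarrow> sub s1 \<inter> sub s2 = {}"
proof (rule ccontr)
  assume s: "s1 \<in> N - Q" "s2 \<in> N - Q" "s1 \<noteq> s2" and "sub s1 \<inter> sub s2 \<noteq> {}"
  then obtain y where "(y, s1) \<in> R\<^sup>*" "(y, s2) \<in> R\<^sup>*" unfolding sub_def by auto
  then have "(s1, s2) \<in> R\<^sup>* \<or> (s2, s1) \<in> R\<^sup>*" by (rule R_comp)
  then show False using s by (auto simp: R_iff elim: converse_rtranclE)
qed

lemma is_path_Cons: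
  assumes "is_path V E ps" "x \<in> V" "x \<notin> set ps" "{x, hd ps} \<in> E"
  shows "is_path V E (x # ps)"
  using assms unfolding is_path_def
  by (auto simp: nth_Cons hd_conv_nth split: nat.splits)

lemma path_up: "(a, b) \<in> R\<^sup>* \<Longrightarrow> a \<in> N \<Longrightarrow> \<exists>ps. is_path N EdF ps \<and> hd ps = a \<and> last ps = b \<and>
   (\<forall>y\<in>set ps. (a, y) \<in> R\<^sup>* \<and> (y, b) \<in> R\<^sup>*)"
proof (induction rule: converse_rtrancl_induct)
  case base
  then show ?case by (intro exI[of _ "[b]"]) (auto simp: is_path_def)
next
  case (step y z)
  then have yz: "y \<in> Q" "z = par y" by (auto simp: R_iff)
  then have "z \<in> N" using parN by auto
  with step obtain ps where ps: "is_path N EdF ps" "hd ps = z" "last ps = b"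
    "\<forall>w\<in>set ps. (z, w) \<in> R\<^sup>* \<and> (w, b) \<in> R\<^sup>*" by blast
  have ny: "y \<notin> set ps"
  proof
    assume "y \<in> set ps"
    then have "(z, y) \<in> R\<^sup>*" using ps by blast
    with step(1) have "y = z" using R_antisym by blast
    then show False using yz pardep by fastforce
  qed
  have "is_path N EdF (y # ps)"
    using ps ny step yz unfolding EdF_def by (intro is_path_Cons) auto
  moreover have "last (y # ps) = b" using ps by (auto simp: is_path_def)
  moreover have "\<forall>w\<in>set (y # ps). (y, w) \<in> R\<^sup>* \<and> (w, b) \<in> R\<^sup>*"
    using ps step by (auto intro: converse_rtrancl_into_rtrancl)
  ultimately show ?case by (intro exI[of _ "y # ps"]) auto
qed

end

lemma inner_set: "distinct ps \<Longrightarrow> y \<in> set (butlast (tl ps)) \<Longrightarrow> y \<in> set ps \<and> y \<noteq> hd ps \<and> y \<noteq> last ps"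
proof (cases ps)
  case (Cons x xs)
  assume d: "distinct ps" and y: "y \<in> set (butlast (tl ps))"
  with Cons have xs: "xs \<noteq> []" "y \<in> set (butlast xs)" by auto
  have "xs = butlast xs @ [last xs]" using xs by simp
  then have "distinct (butlast xs @ [last xs])" using d Cons by simp
  then have "last xs \<notin> set (butlast xs)" by simp
  moreover have "x \<notin> set xs" using d Cons by simp
  ultimately show ?thesis using xs Cons by (auto dest: in_set_butlastD)
qed simp

lemma cbt_verts_Suc: "xs \<in> cbt_verts (Suc k) \<longleftrightarrow> xs = [] \<or> (\<exists>ys b. xs = ys @ [b] \<and> ys \<in> cbt_verts k)"
  by (cases xs rule: rev_cases) (auto simp: cbt_verts_def)

lemma cbt_verts_0: "cbt_verts 0 = {[]}" by (auto simp: cbt_verts_def)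
lemma cbt_edges_0: "cbt_edges 0 = {}" by (auto simp: cbt_edges_def)

lemma cbt_edges_Suc: "e \<in> cbt_edges (Suc k) \<longleftrightarrow>
   (\<exists>b. e = {[], [b]}) \<or> (\<exists>ys c b. e = {ys @ [b], c # ys @ [b]} \<and> length ys < k)"
proof
  assume "e \<in> cbt_edges (Suc k)"
  then obtain xs c where e: "e = {xs, c # xs}" "length xs < Suc k" unfolding cbt_edges_def by auto
  then show "(\<exists>b. e = {[], [b]}) \<or> (\<exists>ys c b. e = {ys @ [b], c # ys @ [b]} \<and> length ys < k)"
    by (cases xs rule: rev_cases) auto
next
  assume "(\<exists>b. e = {[], [b]}) \<or> (\<exists>ys c b. e = {ys @ [b], c # ys @ [b]} \<and> length ys < k)"
  then show "e \<in> cbt_edges (Suc k)" unfolding cbt_edges_def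
  proof
    assume "\<exists>b. e = {[], [b]}"
    then obtain b where "e = {[], [b]}" by blast
    then show "e \<in> {{xs, b # xs} |xs b. length xs < Suc k}" by auto
  next
    assume "\<exists>ys c b. e = {ys @ [b], c # ys @ [b]} \<and> length ys < k"
    then obtain ys c b where "e = {ys @ [b], c # ys @ [b]}" "length ys < k" by blast
    then show "e \<in> {{xs, b # xs} |xs b. length xs < Suc k}"
      by (intro CollectI exI[of _ "ys @ [b]"] exI[of _ c]) auto
  qed
qed

lemma cbt_edge_k: "{ys, c # ys} \<in> cbt_edges k \<longleftrightarrow> length ys < k"
proof
  assume "{ys, c # ys} \<in> cbt_edges k"
  then obtain xs d where "{ys, c # ys} = {xs, d # xs}" "length xs < k" unfolding cbt_edges_def by auto
  then show "length ys < k" unfolding doubleton_eq_iff by (auto dest: arg_cong[of _ _ length])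
qed (auto simp: cbt_edges_def)

context forest begin

inductive Dn :: "nat \<Rightarrow> 'n \<Rightarrow> bool" where
  D0: "s \<in> N \<Longrightarrow> Dn 0 s"
| Dup: "c \<in> Q \<Longrightarrow> Dn k c \<Longrightarrow> Dn k (par c)"
| Dsplit: "c1 \<in> Q \<Longrightarrow> c2 \<in> Q \<Longrightarrow> c1 \<noteq> c2 \<Longrightarrow> par c1 = par c2 \<Longrightarrow> Dn k c1 \<Longrightarrow> Dn k c2 \<Longrightarrow> Dn (Suc k) (par c1)"

definition Emb :: "nat \<Rightarrow> 'n \<Rightarrow> (bool list \<Rightarrow> 'n) \<Rightarrow> (bool list set \<Rightarrow> 'n list) \<Rightarrow> bool" where
 "Emb k t \<phi> P \<longleftrightarrow> inj_on \<phi> (cbt_verts k) \<and> \<phi> ` cbt_verts k \<subseteq> sub t \<and> \<phi> [] = t \<and>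
   (\<forall>e\<in>cbt_edges k. is_path N EdF (P e) \<and> {hd (P e), last (P e)} = \<phi> ` e \<and> set (P e) \<subseteq> sub t \<and>
       set (butlast (tl (P e))) \<inter> \<phi> ` cbt_verts k = {}) \<and>
   (\<forall>e\<in>cbt_edges k. \<forall>e'\<in>cbt_edges k. e \<noteq> e' \<longrightarrow> set (butlast (tl (P e))) \<inter> set (butlast (tl (P e'))) = {})"

lemma sub_trans: "t \<in> sub c \<Longrightarrow> sub t \<subseteq> sub c"
  unfolding sub_def by auto

lemma Dn_N: "Dn k s \<Longrightarrow> s \<in> N"
  by (induction rule: Dn.induct) (auto dest: parN)

end

lemma bt_sub: "set (butlast (tl xs)) \<subseteq> set xs"
  by (cases xs) (auto dest: in_set_butlastD)

context forest begin

lemma ch_iff: "c \<in> ch s \<longleftrightarrow> c \<in> Q \<and> par c = s" unfolding ch_def by auto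

lemma up_inner:
  assumes c: "c \<in> Q" "par c = s" and t: "t \<in> sub c" and y: "(t, y) \<in> R\<^sup>*" "(y, s) \<in> R\<^sup>*" "y \<noteq> t" "y \<noteq> s"
  shows "y \<in> sub c" "y \<notin> sub t"
proof -
  have tN: "t \<in> N" "(t, c) \<in> R\<^sup>*" using t unfolding sub_def by auto
  have yN: "y \<in> N" using R_N[OF y(1) tN(1)] .
  show "y \<notin> sub t"
  proof
    assume "y \<in> sub t"
    then have "(y, t) \<in> R\<^sup>*" unfolding sub_def by auto
    with y(1) have "y = t" using R_antisym by blast
    with y show False by simp
  qed
  from R_comp[OF y(1) tN(2)] show "y \<in> sub c"
  proof
    assume "(y, c) \<in> R\<^sup>*" then show ?thesis using yN unfolding sub_def by auto
  next
    assume cy: "(c, y) \<in> R\<^sup>*"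
    show ?thesis
    proof (cases "c = y")
      case True then show ?thesis using yN unfolding sub_def by auto
    next
      case False
      with cy have "(c, y) \<in> R\<^sup>+" by (simp add: rtrancl_eq_or_trancl)
      then obtain z where "(c, z) \<in> R" "(z, y) \<in> R\<^sup>*" by (meson tranclD)
      then have "(s, y) \<in> R\<^sup>*" using c by (auto simp: R_iff)
      with y(2) have "y = s" using R_antisym by blast
      with y show ?thesis by simp
    qed
  qed
qed

lemma EmbD:
  assumes "Emb k t \<phi> P"
  shows "inj_on \<phi> (cbt_verts k)" "\<phi> ` cbt_verts k \<subseteq> sub t" "\<phi> [] = t"
    "\<And>e. e \<in> cbt_edges k \<Longrightarrow> is_path N EdF (P e)"
    "\<And>e. e \<in> cbt_edges k \<Longrightarrow> {hd (P e), last (P e)} = \<phi> ` e"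
    "\<And>e. e \<in> cbt_edges k \<Longrightarrow> set (P e) \<subseteq> sub t"
    "\<And>e. e \<in> cbt_edges k \<Longrightarrow> set (butlast (tl (P e))) \<inter> \<phi> ` cbt_verts k = {}"
    "\<And>e e'. e \<in> cbt_edges k \<Longrightarrow> e' \<in> cbt_edges k \<Longrightarrow> e \<noteq> e' \<Longrightarrow> set (butlast (tl (P e))) \<inter> set (butlast (tl (P e'))) = {}"
  using assms unfolding Emb_def by simp_all

lemma combine:
  fixes C T :: "bool \<Rightarrow> 'n" and \<Phi> :: "bool \<Rightarrow> bool list \<Rightarrow> 'n" and PP :: "bool \<Rightarrow> bool list set \<Rightarrow> 'n list"
  assumes CT: "\<And>b. C b \<in> Q \<and> par (C b) = s \<and> T b \<in> sub (C b) \<and> Emb k (T b) (\<Phi> b) (PP b)"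
    and dif: "C True \<noteq> C False"
  shows "\<exists>\<phi> P. Emb (Suc k) s \<phi> P"
proof -
  have sN: "s \<in> N" using CT[of True] parN by force
  have Cch: "C b \<in> ch s" for b using CT by (simp add: ch_iff)
  have Cdif: "b \<noteq> b' \<Longrightarrow> C b \<noteq> C b'" for b b' using dif by (cases b; cases b') auto
  have disj: "b \<noteq> b' \<Longrightarrow> sub (C b) \<inter> sub (C b') = {}" for b b'
    using sub_ch_disj[OF Cch Cch Cdif] by blast
  have sC: "s \<notin> sub (C b)" for b using not_sub_ch[OF Cch] .
  have TC: "sub (T b) \<subseteq> sub (C b)" for b using sub_trans CT by blast
  have Cs: "sub (C b) \<subseteq> sub s" for b using sub_ch[OF Cch] .
  have EmbT: "Emb k (T b) (\<Phi> b) (PP b)" for b using CT by blast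
  have ex: "\<forall>b. \<exists>ps. is_path N EdF ps \<and> hd ps = T b \<and> last ps = s \<and> (\<forall>y\<in>set ps. (T b, y) \<in> R\<^sup>* \<and> (y, s) \<in> R\<^sup>*)"
  proof
    fix b
    have "(T b, C b) \<in> R\<^sup>*" "T b \<in> N" using CT[of b] unfolding sub_def by auto
    moreover have "(C b, s) \<in> R" using CT[of b] by (simp add: R_iff)
    ultimately have "(T b, s) \<in> R\<^sup>*" "T b \<in> N" by auto
    then show "\<exists>ps. is_path N EdF ps \<and> hd ps = T b \<and> last ps = s \<and> (\<forall>y\<in>set ps. (T b, y) \<in> R\<^sup>* \<and> (y, s) \<in> R\<^sup>*)"
      using path_up[of "T b" s] by blast
  qed
  obtain UP where UPall: "\<forall>b. is_path N EdF (UP b) \<and> hd (UP b) = T b \<and> last (UP b) = s \<and>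
      (\<forall>y\<in>set (UP b). (T b, y) \<in> R\<^sup>* \<and> (y, s) \<in> R\<^sup>*)" using choice[OF ex] by blast
  have UP: "is_path N EdF (UP b) \<and> hd (UP b) = T b \<and> last (UP b) = s \<and>
      (\<forall>y\<in>set (UP b). (T b, y) \<in> R\<^sup>* \<and> (y, s) \<in> R\<^sup>*)" for b using UPall by blast
  have UPin: "y \<in> sub (C b) \<and> y \<notin> sub (T b)" if "y \<in> set (butlast (tl (UP b)))" for y b
  proof -
    have "distinct (UP b)" using UP[of b] unfolding is_path_def by blast
    from inner_set[OF this that] UP[of b] have "(T b, y) \<in> R\<^sup>*" "(y, s) \<in> R\<^sup>*" "y \<noteq> T b" "y \<noteq> s" by auto
    then show ?thesis using up_inner[of "C b" s "T b" y] CT[of b] by blast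
  qed
  have UPsub: "set (UP b) \<subseteq> sub s" for b
  proof
    fix y assume y: "y \<in> set (UP b)"
    then have "y \<in> N" using UP[of b] unfolding is_path_def by blast
    then show "y \<in> sub s" using UP[of b] y unfolding sub_def by blast
  qed
  define \<phi> where "\<phi> xs = (if xs = [] then s else \<Phi> (last xs) (butlast xs))" for xs
  define P where "P e = (if (\<exists>b. e = {[], [b]}) then UP (THE b. e = {[], [b]})
      else PP (last (SOME x. x \<in> e)) (butlast ` e))" for e
  have phi_app: "\<phi> (ys @ [b]) = \<Phi> b ys" for ys b by (simp add: \<phi>_def)
  have phi_in: "\<phi> (ys @ [b]) \<in> sub (T b)" if "ys \<in> cbt_verts k" for ys b
    using EmbT[of b] that unfolding Emb_def phi_app by blast
  have P1: "P {[], [b]} = UP b" for b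
  proof -
    have "(THE b'. {[], [b]} = {[], [b']}) = b"
      by (rule the_equality) (auto simp: doubleton_eq_iff)
    then show ?thesis unfolding P_def by auto
  qed
  have P2: "P {ys @ [b], c # ys @ [b]} = PP b {ys, c # ys}" for ys b c
  proof -
    let ?e = "{ys @ [b], c # ys @ [b]}"
    have "\<not> (\<exists>b'. ?e = {[], [b']})" by (auto simp: doubleton_eq_iff)
    moreover have "last (SOME x. x \<in> ?e) = b"
    proof -
      have "(SOME x. x \<in> ?e) \<in> ?e" by (rule someI[of _ "ys @ [b]"]) simp
      then show ?thesis by auto
    qed
    moreover have "butlast ` ?e = {ys, c # ys}" by (simp add: butlast_append)
    ultimately show ?thesis unfolding P_def by simp
  qed
  have Vsplit: "xs \<in> cbt_verts (Suc k) \<Longrightarrow> xs = [] \<or> (\<exists>ys b. xs = ys @ [b] \<and> ys \<in> cbt_verts k)" for xs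
    using cbt_verts_Suc by blast
  have phiC: "\<phi> (ys @ [b]) \<in> sub (C b)" if "ys \<in> cbt_verts k" for ys b
    using phi_in[OF that, of b] TC[of b] by (rule subsetD[rotated])
  have phis: "\<phi> [] = s" by (simp add: \<phi>_def)
  have inj: "inj_on \<phi> (cbt_verts (Suc k))"
  proof (rule inj_onI)
    fix x y assume x: "x \<in> cbt_verts (Suc k)" and y: "y \<in> cbt_verts (Suc k)" and eq: "\<phi> x = \<phi> y"
    show "x = y"
    proof (cases "x = []")
      case True
      show ?thesis
      proof (rule ccontr)
        assume "x \<noteq> y"
        with True Vsplit[OF y] obtain ys b where yb: "y = ys @ [b]" "ys \<in> cbt_verts k" by auto
        have "\<phi> y \<in> sub (C b)" unfolding yb(1) by (rule phiC[OF yb(2)])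
        moreover have "\<phi> x = s" using True phis by simp
        ultimately show False using eq sC[of b] by simp
      qed
    next
      case False
      with Vsplit[OF x] obtain xs b where xb: "x = xs @ [b]" "xs \<in> cbt_verts k" by auto
      have px: "\<phi> x \<in> sub (C b)" unfolding xb(1) by (rule phiC[OF xb(2)])
      show ?thesis
      proof (cases "y = []")
        case True then show ?thesis using px eq sC[of b] phis by simp
      next
        case False
        with Vsplit[OF y] obtain ys b' where yb: "y = ys @ [b']" "ys \<in> cbt_verts k" by auto
        have py: "\<phi> y \<in> sub (C b')" unfolding yb(1) by (rule phiC[OF yb(2)])
        have bb: "b = b'"
        proof (rule ccontr)
          assume "b \<noteq> b'"
          then have "sub (C b) \<inter> sub (C b') = {}" by (rule disj)
          then show False using px py eq by auto
        qed
        have "\<Phi> b xs = \<Phi> b ys" using eq unfolding xb(1) yb(1) phi_app bb .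
        moreover have "inj_on (\<Phi> b) (cbt_verts k)" using EmbT[of b] unfolding Emb_def by blast
        ultimately have "xs = ys" using xb(2) yb(2) by (meson inj_onD)
        then show ?thesis using xb yb bb by simp
      qed
    qed
  qed
  have img: "\<phi> ` cbt_verts (Suc k) \<subseteq> sub s"
  proof
    fix z assume "z \<in> \<phi> ` cbt_verts (Suc k)"
    then obtain x where x: "x \<in> cbt_verts (Suc k)" "z = \<phi> x" by blast
    from Vsplit[OF x(1)] show "z \<in> sub s"
    proof
      assume "x = []" then show ?thesis using x sN in_sub_self phis by simp
    next
      assume "\<exists>ys b. x = ys @ [b] \<and> ys \<in> cbt_verts k"
      then obtain ys b where "x = ys @ [b]" "ys \<in> cbt_verts k" by blast
      then have "z \<in> sub (C b)" using x phiC by simp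
      then show ?thesis using Cs[of b] by blast
    qed
  qed
  have img_where: "z \<in> \<phi> ` cbt_verts (Suc k) \<Longrightarrow> z = s \<or> (\<exists>b. z \<in> \<Phi> b ` cbt_verts k)" for z
  proof -
    assume "z \<in> \<phi> ` cbt_verts (Suc k)"
    then obtain x where x: "x \<in> cbt_verts (Suc k)" "z = \<phi> x" by blast
    from Vsplit[OF x(1)] show ?thesis
    proof
      assume "x = []" then show ?thesis using x phis by simp
    next
      assume "\<exists>ys b. x = ys @ [b] \<and> ys \<in> cbt_verts k"
      then obtain ys b where "x = ys @ [b]" "ys \<in> cbt_verts k" by blast
      then show ?thesis using x phi_app by auto
    qed
  qed
  have PhiT: "\<Phi> b ` cbt_verts k \<subseteq> sub (T b)" for b using EmbD(2)[OF EmbT[of b]] .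
  have Esplit: "e \<in> cbt_edges (Suc k) \<Longrightarrow>
     (\<exists>b. e = {[], [b]}) \<or> (\<exists>ys c b. e = {ys @ [b], c # ys @ [b]} \<and> length ys < k)" for e
    using cbt_edges_Suc by blast
  have inner_where: "y \<in> set (butlast (tl (P e))) \<Longrightarrow> e \<in> cbt_edges (Suc k) \<Longrightarrow>
      (\<exists>b. e = {[], [b]} \<and> y \<in> sub (C b) \<and> y \<notin> sub (T b)) \<or>
      (\<exists>ys c b. e = {ys @ [b], c # ys @ [b]} \<and> {ys, c # ys} \<in> cbt_edges k \<and> y \<in> set (butlast (tl (PP b {ys, c # ys}))))" for y e
  proof -
    assume y: "y \<in> set (butlast (tl (P e)))" and e: "e \<in> cbt_edges (Suc k)"
    from Esplit[OF e] show ?thesis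
    proof
      assume "\<exists>b. e = {[], [b]}"
      then obtain b where b: "e = {[], [b]}" by blast
      have "y \<in> set (butlast (tl (UP b)))" using y unfolding b P1 .
      then have "y \<in> sub (C b) \<and> y \<notin> sub (T b)" by (rule UPin)
      then show ?thesis using b by blast
    next
      assume "\<exists>ys c b. e = {ys @ [b], c # ys @ [b]} \<and> length ys < k"
      then obtain ys c b where b: "e = {ys @ [b], c # ys @ [b]}" "length ys < k" by blast
      have "y \<in> set (butlast (tl (PP b {ys, c # ys})))" using y unfolding b(1) P2 .
      moreover have "{ys, c # ys} \<in> cbt_edges k" using b(2) cbt_edge_k by blast
      ultimately show ?thesis using b(1) by blast
    qed
  qed
  have PPinner: "set (butlast (tl (PP b e'))) \<subseteq> sub (T b) \<and> set (butlast (tl (PP b e'))) \<inter> \<Phi> b ` cbt_verts k = {}"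
    if "e' \<in> cbt_edges k" for b e'
  proof -
    have "set (butlast (tl (PP b e'))) \<subseteq> set (PP b e')" by (rule bt_sub)
    then show ?thesis using EmbD(6,7)[OF EmbT[of b] that] by blast
  qed
  have PPC: "y \<in> sub (C b)" if "e' \<in> cbt_edges k" "y \<in> set (butlast (tl (PP b e')))" for y b e'
  proof -
    have "y \<in> sub (T b)" using PPinner[OF that(1), of b] that(2) by blast
    then show ?thesis using TC[of b] by blast
  qed
  have inner_sub: "y \<in> set (butlast (tl (P e))) \<Longrightarrow> e \<in> cbt_edges (Suc k) \<Longrightarrow> \<exists>b. y \<in> sub (C b)" for y e
  proof -
    assume a: "y \<in> set (butlast (tl (P e)))" "e \<in> cbt_edges (Suc k)"
    from inner_where[OF a] show ?thesis
    proof
      assume "\<exists>b. e = {[], [b]} \<and> y \<in> sub (C b) \<and> y \<notin> sub (T b)"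
      then show ?thesis by blast
    next
      assume "\<exists>ys c b. e = {ys @ [b], c # ys @ [b]} \<and> {ys, c # ys} \<in> cbt_edges k \<and> y \<in> set (butlast (tl (PP b {ys, c # ys})))"
      then obtain ys c b where "{ys, c # ys} \<in> cbt_edges k" "y \<in> set (butlast (tl (PP b {ys, c # ys})))" by blast
      then show ?thesis using PPC by blast
    qed
  qed
  have edges: "\<forall>e\<in>cbt_edges (Suc k). is_path N EdF (P e) \<and> {hd (P e), last (P e)} = \<phi> ` e \<and> set (P e) \<subseteq> sub s \<and>
       set (butlast (tl (P e))) \<inter> \<phi> ` cbt_verts (Suc k) = {}"
  proof
    fix e assume e: "e \<in> cbt_edges (Suc k)"
    have notin: "set (butlast (tl (P e))) \<inter> \<phi> ` cbt_verts (Suc k) = {}"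
    proof (rule ccontr)
      assume "set (butlast (tl (P e))) \<inter> \<phi> ` cbt_verts (Suc k) \<noteq> {}"
      then obtain y where y: "y \<in> set (butlast (tl (P e)))" "y \<in> \<phi> ` cbt_verts (Suc k)" by blast
      from inner_sub[OF y(1) e] obtain b where yb: "y \<in> sub (C b)" by blast
      from img_where[OF y(2)] have "y = s \<or> (\<exists>b. y \<in> \<Phi> b ` cbt_verts k)" .
      then obtain b' where yb': "y \<in> \<Phi> b' ` cbt_verts k" using yb sC by blast
      then have "y \<in> sub (C b')" using PhiT TC by blast
      then have bb: "b' = b" using disj yb by blast
      from inner_where[OF y(1) e] show False
      proof
        assume "\<exists>b. e = {[], [b]} \<and> y \<in> sub (C b) \<and> y \<notin> sub (T b)"
        then obtain b'' where "y \<in> sub (C b'')" "y \<notin> sub (T b'')" by blast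
        moreover have "b'' = b" using disj yb \<open>y \<in> sub (C b'')\<close> by blast
        ultimately show False using yb' bb PhiT by blast
      next
        assume "\<exists>ys c b. e = {ys @ [b], c # ys @ [b]} \<and> {ys, c # ys} \<in> cbt_edges k \<and> y \<in> set (butlast (tl (PP b {ys, c # ys})))"
        then obtain ys c b'' where yy: "{ys, c # ys} \<in> cbt_edges k" "y \<in> set (butlast (tl (PP b'' {ys, c # ys})))" by blast
        then have "y \<in> sub (C b'')" by (rule PPC)
        then have b2: "b'' = b" using disj yb by blast
        have "y \<notin> \<Phi> b'' ` cbt_verts k" using PPinner[OF yy(1), of b''] yy(2) by blast
        then show False using yb' bb b2 by simp
      qed
    qed
    from Esplit[OF e] have rest: "is_path N EdF (P e) \<and> {hd (P e), last (P e)} = \<phi> ` e \<and> set (P e) \<subseteq> sub s"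
    proof
      assume "\<exists>b. e = {[], [b]}"
      then obtain b where b: "e = {[], [b]}" by blast
      have "\<phi> [b] = T b" using phi_app[of "[]" b] EmbD(3)[OF EmbT[of b]] by simp
      moreover have "\<phi> [] = s" by (simp add: \<phi>_def)
      ultimately show ?thesis using b P1 UP[of b] UPsub[of b] by auto
    next
      assume "\<exists>ys c b. e = {ys @ [b], c # ys @ [b]} \<and> length ys < k"
      then obtain ys c b where b: "e = {ys @ [b], c # ys @ [b]}" "length ys < k" by blast
      then have e': "{ys, c # ys} \<in> cbt_edges k" using cbt_edge_k by blast
      have im: "\<phi> ` e = \<Phi> b ` {ys, c # ys}" using b phi_app[of ys b] phi_app[of "c # ys" b] by simp
      have pe: "P e = PP b {ys, c # ys}" using b P2 by simp
      have "set (PP b {ys, c # ys}) \<subseteq> sub s" using EmbD(6)[OF EmbT[of b] e'] TC[of b] Cs[of b] by blast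
      then show ?thesis unfolding pe im using EmbD(4,5)[OF EmbT[of b] e'] by blast
    qed
    show "is_path N EdF (P e) \<and> {hd (P e), last (P e)} = \<phi> ` e \<and> set (P e) \<subseteq> sub s \<and>
       set (butlast (tl (P e))) \<inter> \<phi> ` cbt_verts (Suc k) = {}" using rest notin by blast
  qed
  have inner_info: "\<exists>b. y \<in> sub (C b) \<and>
      ((e = {[], [b]} \<and> y \<notin> sub (T b)) \<or>
       (\<exists>e''. e'' \<in> cbt_edges k \<and> e = (\<lambda>xs. xs @ [b]) ` e'' \<and> y \<in> set (butlast (tl (PP b e'')))))"
    if y: "y \<in> set (butlast (tl (P e)))" and e: "e \<in> cbt_edges (Suc k)" for y e
  proof -
    from inner_where[OF y e] show ?thesis
    proof
      assume "\<exists>b. e = {[], [b]} \<and> y \<in> sub (C b) \<and> y \<notin> sub (T b)"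
      then show ?thesis by blast
    next
      assume "\<exists>ys c b. e = {ys @ [b], c # ys @ [b]} \<and> {ys, c # ys} \<in> cbt_edges k \<and> y \<in> set (butlast (tl (PP b {ys, c # ys})))"
      then obtain ys c b where a: "e = {ys @ [b], c # ys @ [b]}" "{ys, c # ys} \<in> cbt_edges k"
        "y \<in> set (butlast (tl (PP b {ys, c # ys})))" by blast
      have "y \<in> sub (C b)" using PPC[OF a(2,3)] .
      moreover have "e = (\<lambda>xs. xs @ [b]) ` {ys, c # ys}" using a(1) by simp
      ultimately show ?thesis using a(2,3) by blast
    qed
  qed
  have pdisj: "\<forall>e\<in>cbt_edges (Suc k). \<forall>e'\<in>cbt_edges (Suc k). e \<noteq> e' \<longrightarrow>
      set (butlast (tl (P e))) \<inter> set (butlast (tl (P e'))) = {}"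
  proof (intro ballI impI)
    fix e e' assume e: "e \<in> cbt_edges (Suc k)" and e': "e' \<in> cbt_edges (Suc k)" and ne: "e \<noteq> e'"
    show "set (butlast (tl (P e))) \<inter> set (butlast (tl (P e'))) = {}"
    proof (rule ccontr)
      assume "set (butlast (tl (P e))) \<inter> set (butlast (tl (P e'))) \<noteq> {}"
      then obtain y where y: "y \<in> set (butlast (tl (P e)))" "y \<in> set (butlast (tl (P e')))" by blast
      obtain b where b: "y \<in> sub (C b)" "(e = {[], [b]} \<and> y \<notin> sub (T b)) \<or>
       (\<exists>e''. e'' \<in> cbt_edges k \<and> e = (\<lambda>xs. xs @ [b]) ` e'' \<and> y \<in> set (butlast (tl (PP b e''))))"
        using inner_info[OF y(1) e] by blast
      obtain b' where b': "y \<in> sub (C b')" "(e' = {[], [b']} \<and> y \<notin> sub (T b')) \<or>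
       (\<exists>e''. e'' \<in> cbt_edges k \<and> e' = (\<lambda>xs. xs @ [b']) ` e'' \<and> y \<in> set (butlast (tl (PP b' e''))))"
        using inner_info[OF y(2) e'] by blast
      have bb: "b' = b"
      proof (rule ccontr)
        assume "b' \<noteq> b"
        then have "sub (C b') \<inter> sub (C b) = {}" by (rule disj)
        then show False using b(1) b'(1) by blast
      qed
      have inT: "y \<in> sub (T b)" if "e'' \<in> cbt_edges k" "y \<in> set (butlast (tl (PP b e'')))" for e''
        using PPinner[OF that(1), of b] that(2) by blast
      from b(2) show False
      proof
        assume A: "e = {[], [b]} \<and> y \<notin> sub (T b)"
        from b'(2) show False
        proof
          assume "e' = {[], [b']} \<and> y \<notin> sub (T b')"
          then show False using A ne bb by simp
        next
          assume "\<exists>e''. e'' \<in> cbt_edges k \<and> e' = (\<lambda>xs. xs @ [b']) ` e'' \<and> y \<in> set (butlast (tl (PP b' e'')))"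
          then show False using A inT bb by blast
        qed
      next
        assume "\<exists>e''. e'' \<in> cbt_edges k \<and> e = (\<lambda>xs. xs @ [b]) ` e'' \<and> y \<in> set (butlast (tl (PP b e'')))"
        then obtain e1 where A: "e1 \<in> cbt_edges k" "e = (\<lambda>xs. xs @ [b]) ` e1" "y \<in> set (butlast (tl (PP b e1)))"
          by blast
        from b'(2) show False
        proof
          assume "e' = {[], [b']} \<and> y \<notin> sub (T b')"
          then show False using A inT bb by blast
        next
          assume "\<exists>e''. e'' \<in> cbt_edges k \<and> e' = (\<lambda>xs. xs @ [b']) ` e'' \<and> y \<in> set (butlast (tl (PP b' e'')))"
          then obtain e2 where B: "e2 \<in> cbt_edges k" "e' = (\<lambda>xs. xs @ [b]) ` e2" "y \<in> set (butlast (tl (PP b e2)))"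
            using bb by blast
          have "e1 \<noteq> e2" using A(2) B(2) ne by blast
          then show False using EmbD(8)[OF EmbT[of b] A(1) B(1)] A(3) B(3) by blast
        qed
      qed
    qed
  qed
  have "Emb (Suc k) s \<phi> P"
    unfolding Emb_def using inj img edges pdisj by (simp add: \<phi>_def)
  then show ?thesis by blast
qed

end

context forest begin

lemma Dn_Emb: "Dn k s \<Longrightarrow> \<exists>t \<phi> P. t \<in> sub s \<and> Emb k t \<phi> P"
proof (induction rule: Dn.induct)
  case (D0 s)
  have "Emb 0 s (\<lambda>_. s) (\<lambda>_. [s])"
    unfolding Emb_def cbt_verts_0 cbt_edges_0 using D0 in_sub_self by simp
  then show ?case using D0 in_sub_self by blast
next
  case (Dup c k)
  then obtain t \<phi> P where "t \<in> sub c" "Emb k t \<phi> P" by blast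
  moreover have "sub c \<subseteq> sub (par c)" using Dup(1) by (intro sub_ch) (simp add: ch_iff)
  ultimately show ?case by blast
next
  case (Dsplit c1 c2 k)
  obtain t1 \<phi>1 P1 where 1: "t1 \<in> sub c1" "Emb k t1 \<phi>1 P1" using Dsplit.IH(1) by blast
  obtain t2 \<phi>2 P2 where 2: "t2 \<in> sub c2" "Emb k t2 \<phi>2 P2" using Dsplit.IH(2) by blast
  let ?C = "\<lambda>b. if b then c1 else c2"
  let ?T = "\<lambda>b. if b then t1 else t2"
  let ?F = "\<lambda>b. if b then \<phi>1 else \<phi>2"
  let ?P = "\<lambda>b. if b then P1 else P2"
  have "\<And>b. ?C b \<in> Q \<and> par (?C b) = par c1 \<and> ?T b \<in> sub (?C b) \<and> Emb k (?T b) (?F b) (?P b)"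
    using 1 2 Dsplit.hyps by auto
  then obtain \<phi> P where "Emb (Suc k) (par c1) \<phi> P"
    using combine[of ?C "par c1" ?T k ?F ?P] Dsplit.hyps(3) by auto
  moreover have "par c1 \<in> sub (par c1)" using Dsplit.hyps(1) parN in_sub_self by blast
  ultimately show ?case by blast
qed

lemma Dn_subdiv: "Dn h s \<Longrightarrow> contains_subdivision (cbt_verts h) (cbt_edges h) N EdF"
proof -
  assume "Dn h s"
  then obtain t \<phi> P where "Emb h t \<phi> P" using Dn_Emb by blast
  note E = EmbD[OF this]
  have "\<phi> ` cbt_verts h \<subseteq> N" using E(2) sub_N by blast
  then show ?thesis unfolding contains_subdivision_def
    by (intro exI[of _ \<phi>] exI[of _ P] conjI ballI impI E(1) E(4) E(5) E(7) E(8)) auto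
qed

lemma Dn_up: "Dn k c \<Longrightarrow> c \<in> ch s \<Longrightarrow> Dn k s"
  using Dup[of c k] by (simp add: ch_iff)

end

lemma card4: "card {a, b, c, d} \<le> 4"
  by (auto simp: card_insert_if)

lemma card3: "card {a, b, c} \<le> 3"
  by (auto simp: card_insert_if)

locale tforest = forest N Q par dep for N :: "'n set" and Q par dep +
  fixes f :: "'n \<Rightarrow> nat \<Rightarrow> 't" and lo hi :: "'n \<Rightarrow> nat" and at cn :: "'n \<Rightarrow> nat" and ET :: "'t set set"
  assumes lohi: "s \<in> N \<Longrightarrow> lo s \<le> hi s"
    and finj: "s \<in> N \<Longrightarrow> inj_on (f s) {lo s..hi s}"
    and fdisj: "s \<in> N \<Longrightarrow> s' \<in> N \<Longrightarrow> i \<in> {lo s..hi s} \<Longrightarrow> i' \<in> {lo s'..hi s'} \<Longrightarrow> f s i = f s' i' \<Longrightarrow> s = s'"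
    and atin: "y \<in> Q \<Longrightarrow> at y \<in> {lo (par y)..hi (par y)}"
    and cnin: "y \<in> Q \<Longrightarrow> cn y \<in> {lo y..hi y}"
    and ecls: "e \<in> ET \<Longrightarrow> e \<subseteq> (\<Union>s\<in>N. f s ` {lo s..hi s}) \<Longrightarrow>
       (\<exists>s i. s \<in> N \<and> lo s \<le> i \<and> Suc i \<le> hi s \<and> e = {f s i, f s (Suc i)}) \<or> (\<exists>y\<in>Q. e = {f (par y) (at y), f y (cn y)})"
begin

definition F where "F s = f s ` {lo s..hi s}"
definition FU where "FU A = (\<Union>s\<in>A. F s)"
definition X where "X s = FU (sub s)"

lemma FU_Un: "FU (A \<union> B) = FU A \<union> FU B" unfolding FU_def by auto

lemma ident: "t \<in> N \<Longrightarrow> i \<in> {lo t..hi t} \<Longrightarrow> B \<subseteq> N \<Longrightarrow> f t i \<in> FU B \<Longrightarrow> t \<in> B"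
proof -
  assume a: "t \<in> N" "i \<in> {lo t..hi t}" "B \<subseteq> N" "f t i \<in> FU B"
  then obtain t' i' where "t' \<in> B" "i' \<in> {lo t'..hi t'}" "f t i = f t' i'" unfolding FU_def F_def by blast
  then have "t = t'" using fdisj[of t t' i i'] a by blast
  then show ?thesis using \<open>t' \<in> B\<close> by simp
qed

lemma FU_disj: "A \<subseteq> N \<Longrightarrow> B \<subseteq> N \<Longrightarrow> A \<inter> B = {} \<Longrightarrow> FU A \<inter> FU B = {}"
proof (rule ccontr)
  assume a: "A \<subseteq> N" "B \<subseteq> N" "A \<inter> B = {}" "FU A \<inter> FU B \<noteq> {}"
  then obtain u where u: "u \<in> FU A" "u \<in> FU B" by blast
  then obtain t i where ti: "t \<in> A" "i \<in> {lo t..hi t}" "u = f t i" unfolding FU_def F_def by blast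
  then have "t \<in> B" using ident[of t i B] a u by blast
  then show False using ti a by blast
qed

lemma finite_FU: "A \<subseteq> N \<Longrightarrow> finite (FU A)"
  unfolding FU_def F_def using finN finite_subset by blast

lemma F_sub_FU: "t \<in> A \<Longrightarrow> F t \<subseteq> FU A" unfolding FU_def by blast

lemma fF: "i \<in> {lo t..hi t} \<Longrightarrow> f t i \<in> F t" unfolding F_def by blast

lemma cross:
  assumes A: "A \<subseteq> N" and c: "c \<in> N" and dj: "A \<inter> sub c = {}" and e: "e \<in> ET" and eY: "e \<subseteq> FU A \<union> FU (sub c)"
  shows "e \<subseteq> FU A \<or> e \<subseteq> FU (sub c) \<or> (c \<in> Q \<and> e = {f (par c) (at c), f c (cn c)})"
proof -
  have AB: "A \<union> sub c \<subseteq> N" using A sub_N by blast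
  have eU: "e \<subseteq> FU (A \<union> sub c)" using eY FU_Un by simp
  have "e \<subseteq> (\<Union>s\<in>N. f s ` {lo s..hi s})" using eU AB unfolding FU_def F_def by blast
  from ecls[OF e this] show ?thesis
  proof
    assume "\<exists>s i. s \<in> N \<and> lo s \<le> i \<and> Suc i \<le> hi s \<and> e = {f s i, f s (Suc i)}"
    then obtain t i where ti: "t \<in> N" "lo t \<le> i" "Suc i \<le> hi t" "e = {f t i, f t (Suc i)}" by blast
    have "f t i \<in> FU (A \<union> sub c)" using ti eU by blast
    then have tin: "t \<in> A \<union> sub c" using ident[of t i "A \<union> sub c"] ti AB by auto
    have "e \<subseteq> F t" using ti unfolding F_def by auto
    then show ?thesis using tin F_sub_FU[of t A] F_sub_FU[of t "sub c"] by blast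
  next
    assume "\<exists>y\<in>Q. e = {f (par y) (at y), f y (cn y)}"
    then obtain y where y: "y \<in> Q" "e = {f (par y) (at y), f y (cn y)}" by blast
    have yN: "y \<in> N" "par y \<in> N" using y QN parN by auto
    have yin: "y \<in> A \<union> sub c" using ident[of y "cn y" "A \<union> sub c"] cnin[OF y(1)] yN eU y AB by auto
    have pin: "par y \<in> A \<union> sub c" using ident[of "par y" "at y" "A \<union> sub c"] atin[OF y(1)] yN eU y AB by auto
    have e1: "f y (cn y) \<in> F y" using cnin[OF y(1)] by (rule fF)
    have e2: "f (par y) (at y) \<in> F (par y)" using atin[OF y(1)] by (rule fF)
    show ?thesis
    proof (cases "y \<in> A")
      case True
      show ?thesis
      proof (cases "par y \<in> A")
        case True
        then show ?thesis using \<open>y \<in> A\<close> y(2) e1 e2 F_sub_FU[of y A] F_sub_FU[of "par y" A] by blast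
      next
        case False
        then have "par y \<in> sub c" using pin by blast
        then have "y \<in> sub c" using child_sub y(1) by blast
        then show ?thesis using True dj by blast
      qed
    next
      case False
      then have ys: "y \<in> sub c" using yin by blast
      show ?thesis
      proof (cases "y = c")
        case True then show ?thesis using y by blast
      next
        case False
        then have "par y \<in> sub c" using sub_par ys by blast
        then show ?thesis using ys y(2) e1 e2 F_sub_FU[of y "sub c"] F_sub_FU[of "par y" "sub c"] by blast
      qed
    qed
  qed
qed

end

context tforest begin

lemma base:
  assumes s: "s \<in> N" and j: "j \<in> {lo s..hi s}" and m: "m \<in> {lo s..hi s}"
  shows "\<exists>n l r. lay (F s) n l r \<and> eok ET (F s) l r \<and> (\<forall>t<n. cnt (F s) l r t \<le> 4) \<and> cnt (F s) l r 0 \<le> 3 \<and>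
     l (f s j) = 0 \<and> r (f s m) = n - 1 \<and> l (f s m) \<le> n - 1 \<and>
     (\<forall>i\<in>{lo s..hi s}. \<exists>\<tau><n. l (f s i) \<le> \<tau> \<and> \<tau> \<le> r (f s i) \<and> cnt (F s) l r \<tau> \<le> 4)"
proof -
  define L where "L = hi s - lo s + 1"
  define lb where "lb i = (if i = j then 0 else i - lo s)" for i
  define rb where "rb i = (if i = m then L else min (i - lo s + 1) (L - 1))" for i
  define g where "g = the_inv_into {lo s..hi s} (f s)"
  have g: "i \<in> {lo s..hi s} \<Longrightarrow> g (f s i) = i" for i
    unfolding g_def using the_inv_into_f_f[OF finj[OF s]] by blast
  define l where "l u = lb (g u)" for u
  define r where "r u = rb (g u)" for u
  have lf: "i \<in> {lo s..hi s} \<Longrightarrow> l (f s i) = lb i" for i using g l_def by simp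
  have rf: "i \<in> {lo s..hi s} \<Longrightarrow> r (f s i) = rb i" for i using g r_def by simp
  have lr: "i \<in> {lo s..hi s} \<Longrightarrow> lb i \<le> rb i \<and> rb i \<le> L" for i
    unfolding lb_def rb_def L_def by auto
  have alive_pos: "i \<in> {lo s + t, lo s + t - 1, j, m}"
    if "i \<in> {lo s..hi s}" "lb i \<le> t" "t \<le> rb i" for i t
    using that unfolding lb_def rb_def L_def by (auto split: if_splits)
  have alive0: "i \<in> {lo s, j, m}" if "i \<in> {lo s..hi s}" "lb i \<le> 0" for i
    using that unfolding lb_def by (auto split: if_splits)
  have Fs: "F s = f s ` {lo s..hi s}" by (simp add: F_def)
  have finF: "finite (F s)" using Fs by simp
  have "\<forall>u\<in>F s. l u \<le> r u \<and> r u < L + 1"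
  proof
    fix u assume "u \<in> F s"
    then obtain i where i: "i \<in> {lo s..hi s}" "u = f s i" using Fs by blast
    then show "l u \<le> r u \<and> r u < L + 1" using lr[OF i(1)] lf[OF i(1)] rf[OF i(1)] by simp
  qed
  then have lay: "lay (F s) (L + 1) l r" using finF unfolding lay_def by simp
  have cnt4: "cnt (F s) l r t \<le> 4" for t
  proof -
    have "{u \<in> F s. l u \<le> t \<and> t \<le> r u} \<subseteq> f s ` {lo s + t, lo s + t - 1, j, m}"
    proof
      fix u assume "u \<in> {u \<in> F s. l u \<le> t \<and> t \<le> r u}"
      then obtain i where "i \<in> {lo s..hi s}" "u = f s i" "lb i \<le> t" "t \<le> rb i" using Fs lf rf by auto
      then show "u \<in> f s ` {lo s + t, lo s + t - 1, j, m}" using alive_pos by blast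
    qed
    then have "cnt (F s) l r t \<le> card (f s ` {lo s + t, lo s + t - 1, j, m})"
      unfolding cnt_def by (intro card_mono) auto
    also have "\<dots> \<le> card {lo s + t, lo s + t - 1, j, m}" by (rule card_image_le) simp
    also have "\<dots> \<le> 4" by (rule card4)
    finally show ?thesis .
  qed
  have cnt0: "cnt (F s) l r 0 \<le> 3"
  proof -
    have "{u \<in> F s. l u \<le> 0 \<and> 0 \<le> r u} \<subseteq> f s ` {lo s, j, m}"
    proof
      fix u assume "u \<in> {u \<in> F s. l u \<le> 0 \<and> 0 \<le> r u}"
      then obtain i where "i \<in> {lo s..hi s}" "u = f s i" "lb i \<le> 0" using Fs lf by auto
      then show "u \<in> f s ` {lo s, j, m}" using alive0 by blast
    qed
    then have "cnt (F s) l r 0 \<le> card (f s ` {lo s, j, m})"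
      unfolding cnt_def by (intro card_mono) auto
    also have "\<dots> \<le> card {lo s, j, m}" by (rule card_image_le) simp
    also have "\<dots> \<le> 3" by (rule card3)
    finally show ?thesis .
  qed
  have eok: "eok ET (F s) l r"
    unfolding eok_def
  proof (intro ballI impI)
    fix e assume e: "e \<in> ET" "e \<subseteq> F s"
    have "e \<subseteq> (\<Union>s\<in>N. f s ` {lo s..hi s})" using e s Fs by blast
    from ecls[OF e(1) this] show "\<exists>t. \<forall>u\<in>e. l u \<le> t \<and> t \<le> r u"
    proof
      assume "\<exists>s i. s \<in> N \<and> lo s \<le> i \<and> Suc i \<le> hi s \<and> e = {f s i, f s (Suc i)}"
      then obtain t i where ti: "t \<in> N" "lo t \<le> i" "Suc i \<le> hi t" "e = {f t i, f t (Suc i)}" by blast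
      have "f t i \<in> FU {s}" using ti e unfolding FU_def by auto
      then have "t = s" using ident[of t i "{s}"] ti s by auto
      with ti have i: "i \<in> {lo s..hi s}" "Suc i \<in> {lo s..hi s}" "e = {f s i, f s (Suc i)}" by auto
      have "lb i \<le> Suc i - lo s" "Suc i - lo s \<le> rb i" "lb (Suc i) \<le> Suc i - lo s" "Suc i - lo s \<le> rb (Suc i)"
        using i unfolding lb_def rb_def L_def by auto
      then show ?thesis using i lf rf by (intro exI[of _ "Suc i - lo s"]) auto
    next
      assume "\<exists>y\<in>Q. e = {f (par y) (at y), f y (cn y)}"
      then obtain y where y: "y \<in> Q" "e = {f (par y) (at y), f y (cn y)}" by blast
      have yN: "y \<in> N" "par y \<in> N" using y QN parN by auto
      have "f y (cn y) \<in> FU {s}" "f (par y) (at y) \<in> FU {s}" using y e unfolding FU_def by auto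
      then have "y = s" "par y = s" using ident[of y "cn y" "{s}"] ident[of "par y" "at y" "{s}"]
          cnin[OF y(1)] atin[OF y(1)] yN s by auto
      then show ?thesis using pardep[OF y(1)] by simp
    qed
  qed
  have wit: "\<forall>i\<in>{lo s..hi s}. \<exists>\<tau><L+1. l (f s i) \<le> \<tau> \<and> \<tau> \<le> r (f s i) \<and> cnt (F s) l r \<tau> \<le> 4"
  proof
    fix i assume i: "i \<in> {lo s..hi s}"
    have "lb i \<le> i - lo s" "i - lo s \<le> rb i" "i - lo s < L + 1" using i unfolding lb_def rb_def L_def by auto
    then show "\<exists>\<tau><L+1. l (f s i) \<le> \<tau> \<and> \<tau> \<le> r (f s i) \<and> cnt (F s) l r \<tau> \<le> 4"
      using i lf rf cnt4 by auto
  qed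
  have "l (f s j) = 0" using lf[OF j] by (simp add: lb_def)
  moreover have "r (f s m) = L + 1 - 1" using rf[OF m] by (simp add: rb_def)
  moreover have "l (f s m) \<le> L + 1 - 1" using lf[OF m] lr[OF m] rf[OF m] by (simp add: rb_def)
  ultimately show ?thesis using lay eok cnt4 cnt0 wit by blast
qed

end

context tforest begin

definition good :: "nat \<Rightarrow> 't set \<Rightarrow> 't \<Rightarrow> bool" where
 "good W Y p \<longleftrightarrow> (\<exists>n l r. lay Y n l r \<and> eok ET Y l r \<and> (\<forall>t<n. cnt Y l r t \<le> W) \<and> cnt Y l r 0 \<le> 3 \<and> l p = 0)"

definition inv :: "nat \<Rightarrow> 'n \<Rightarrow> nat \<Rightarrow> 'n set \<Rightarrow> bool" where
 "inv W s j A \<longleftrightarrow> (\<exists>n l r. lay (FU A) n l r \<and> eok ET (FU A) l r \<and> (\<forall>t<n. cnt (FU A) l r t \<le> W) \<and>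
    cnt (FU A) l r 0 \<le> 3 \<and> l (f s j) = 0 \<and>
    (\<forall>i\<in>{lo s..hi s}. \<exists>\<tau><n. l (f s i) \<le> \<tau> \<and> \<tau> \<le> r (f s i) \<and> cnt (FU A) l r \<tau> \<le> 4))"

lemma X_FU: "X c = FU (sub c)" by (simp add: X_def)

lemma fX: "c \<in> N \<Longrightarrow> i \<in> {lo c..hi c} \<Longrightarrow> f c i \<in> X c"
  unfolding X_def using F_sub_FU[of c "sub c"] fF in_sub_self by blast

lemma light_ins:
  assumes inv: "inv W s j A" and A: "A \<subseteq> N" "s \<in> A" and s: "s \<in> N" and j: "j \<in> {lo s..hi s}"
    and c: "c \<in> ch s" and dj: "A \<inter> sub c = {}"
    and g: "good W' (X c) (f c (cn c))" and W: "4 + W' \<le> W"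
  shows "inv W s j (A \<union> sub c)"
proof -
  obtain n1 l1 r1 where I: "lay (FU A) n1 l1 r1" "eok ET (FU A) l1 r1" "\<forall>t<n1. cnt (FU A) l1 r1 t \<le> W"
    "cnt (FU A) l1 r1 0 \<le> 3" "l1 (f s j) = 0"
    "\<forall>i\<in>{lo s..hi s}. \<exists>\<tau><n1. l1 (f s i) \<le> \<tau> \<and> \<tau> \<le> r1 (f s i) \<and> cnt (FU A) l1 r1 \<tau> \<le> 4"
    using inv unfolding inv_def by blast
  obtain n2 l2 r2 where G: "lay (X c) n2 l2 r2" "eok ET (X c) l2 r2" "\<forall>t<n2. cnt (X c) l2 r2 t \<le> W'"
    "cnt (X c) l2 r2 0 \<le> 3" "l2 (f c (cn c)) = 0"
    using g unfolding good_def by blast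
  have cQ: "c \<in> Q" "par c = s" using c by (auto simp: ch_iff)
  have cN: "c \<in> N" using cQ QN by blast
  have atc: "at c \<in> {lo s..hi s}" using atin[OF cQ(1)] cQ by simp
  obtain \<tau> where tau: "\<tau> < n1" "l1 (f s (at c)) \<le> \<tau>" "\<tau> \<le> r1 (f s (at c))" "cnt (FU A) l1 r1 \<tau> \<le> 4"
    using I(6) atc by blast
  have disj: "FU A \<inter> X c = {}" unfolding X_def using FU_disj[OF A(1) sub_N dj] .
  define P where "P = {f s (at c)}"
  let ?L = "insl (FU A) l1 \<tau> n2 l2"
  let ?R = "insr (FU A) r1 \<tau> n2 P r2"
  have Y: "FU (A \<union> sub c) = FU A \<union> X c" by (simp add: FU_Un X_def)
  have sA: "F s \<subseteq> FU A" using F_sub_FU A(2) by blast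
  have lay: "lay (FU A \<union> X c) (n1 + n2) ?L ?R" by (rule ins_lay[OF I(1) G(1) tau(1) disj])
  have cr: "\<forall>e\<in>ET. e \<subseteq> FU A \<union> X c \<longrightarrow> e \<subseteq> FU A \<or> e \<subseteq> X c \<or>
        (\<exists>p q. e = {p, q} \<and> p \<in> P \<and> p \<in> FU A \<and> l1 p \<le> \<tau> \<and> \<tau> \<le> r1 p \<and> q \<in> X c \<and> l2 q = 0)"
  proof (intro ballI impI)
    fix e assume e: "e \<in> ET" "e \<subseteq> FU A \<union> X c"
    from cross[OF A(1) cN dj e(1)] e(2) have
      "e \<subseteq> FU A \<or> e \<subseteq> X c \<or> (c \<in> Q \<and> e = {f (par c) (at c), f c (cn c)})" unfolding X_def by blast
    moreover have "f s (at c) \<in> FU A" using sA fF[OF atc] by blast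
    moreover have "f c (cn c) \<in> X c" using fX[OF cN cnin[OF cQ(1)]] .
    ultimately show "e \<subseteq> FU A \<or> e \<subseteq> X c \<or>
        (\<exists>p q. e = {p, q} \<and> p \<in> P \<and> p \<in> FU A \<and> l1 p \<le> \<tau> \<and> \<tau> \<le> r1 p \<and> q \<in> X c \<and> l2 q = 0)"
      using tau G(5) cQ unfolding P_def by blast
  qed
  have eok: "eok ET (FU A \<union> X c) ?L ?R" by (rule ins_eok[OF I(1) G(1) tau(1) disj I(2) G(2) cr])
  have cntb: "\<forall>t<n1+n2. cnt (FU A \<union> X c) ?L ?R t \<le> W"
  proof (intro allI impI)
    fix t assume t: "t < n1 + n2"
    have "cnt (FU A \<union> X c) ?L ?R (\<tau> + 1 + t') \<le> W" if "t' < n2" for t'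
    proof -
      have "cnt (FU A \<union> X c) ?L ?R (\<tau> + 1 + t') \<le> cnt (FU A) l1 r1 \<tau> + cnt (X c) l2 r2 t'"
        by (rule ins_cnt_mid_light[OF I(1) G(1) tau(1) disj that])
      then show ?thesis using tau(4) G(3) that W by fastforce
    qed
    then show "cnt (FU A \<union> X c) ?L ?R t \<le> W"
      using ins_cnt_bound[OF I(1) G(1) tau(1) disj, of W P t] I(3) t by blast
  qed
  have c0: "cnt (FU A \<union> X c) ?L ?R 0 \<le> 3"
    using ins_cnt_lo[OF I(1) G(1) tau(1) disj, of 0 P] I(4) by simp
  have fj: "f s j \<in> FU A" using sA fF[OF j] by blast
  have lj: "?L (f s j) = 0" using fj I(5) unfolding insl_def by simp
  have wit: "\<forall>i\<in>{lo s..hi s}. \<exists>\<tau>'<n1+n2. ?L (f s i) \<le> \<tau>' \<and> \<tau>' \<le> ?R (f s i) \<and> cnt (FU A \<union> X c) ?L ?R \<tau>' \<le> 4"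
  proof
    fix i assume i: "i \<in> {lo s..hi s}"
    obtain t where t: "t < n1" "l1 (f s i) \<le> t" "t \<le> r1 (f s i)" "cnt (FU A) l1 r1 t \<le> 4"
      using I(6) i by blast
    have fi: "f s i \<in> FU A" using sA fF[OF i] by blast
    have al: "?L (f s i) \<le> (if t \<le> \<tau> then t else t + n2) \<and> (if t \<le> \<tau> then t else t + n2) \<le> ?R (f s i)"
      by (rule ins_alive1[OF I(1) G(1) tau(1) disj fi t(2,3)])
    show "\<exists>\<tau>'<n1+n2. ?L (f s i) \<le> \<tau>' \<and> \<tau>' \<le> ?R (f s i) \<and> cnt (FU A \<union> X c) ?L ?R \<tau>' \<le> 4"
    proof (cases "t \<le> \<tau>")
      case True
      then have "cnt (FU A \<union> X c) ?L ?R t = cnt (FU A) l1 r1 t"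
        by (rule ins_cnt_lo[OF I(1) G(1) tau(1) disj])
      then show ?thesis using True al t by (intro exI[of _ t]) auto
    next
      case False
      then have "cnt (FU A \<union> X c) ?L ?R (t + n2) = cnt (FU A) l1 r1 (t + n2 - n2)"
        by (intro ins_cnt_hi[OF I(1) G(1) tau(1) disj]) simp
      then show ?thesis using False al t by (intro exI[of _ "t + n2"]) auto
    qed
  qed
  show ?thesis unfolding inv_def Y using lay eok cntb c0 lj wit by blast
qed

lemma heavy_ins:
  assumes B: "lay (F s) n1 l1 r1" "eok ET (F s) l1 r1" "\<forall>t<n1. cnt (F s) l1 r1 t \<le> 4" "cnt (F s) l1 r1 0 \<le> 3"
    "l1 (f s j) = 0" "r1 (f s m) = n1 - 1" "l1 (f s m) \<le> n1 - 1"
    "\<forall>i\<in>{lo s..hi s}. \<exists>\<tau><n1. l1 (f s i) \<le> \<tau> \<and> \<tau> \<le> r1 (f s i) \<and> cnt (F s) l1 r1 \<tau> \<le> 4"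
    and s: "s \<in> N" and j: "j \<in> {lo s..hi s}" and h: "h \<in> ch s" and m: "m = at h" and g: "good W (X h) (f h (cn h))" and W: "4 \<le> W"
  shows "inv W s j ({s} \<union> sub h)"
proof -
  obtain n2 l2 r2 where G: "lay (X h) n2 l2 r2" "eok ET (X h) l2 r2" "\<forall>t<n2. cnt (X h) l2 r2 t \<le> W"
    "cnt (X h) l2 r2 0 \<le> 3" "l2 (f h (cn h)) = 0"
    using g unfolding good_def by blast
  have hQ: "h \<in> Q" "par h = s" using h by (auto simp: ch_iff)
  have hN: "h \<in> N" using hQ QN by blast
  have Fs: "F s = FU {s}" by (simp add: FU_def)
  have n1: "0 < n1" using B(1) unfolding lay_def by blast
  define \<tau> where "\<tau> = n1 - 1"
  have tau: "\<tau> < n1" using n1 unfolding \<tau>_def by simp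
  have dj: "{s} \<inter> sub h = {}" using not_sub_ch[OF h] by blast
  have disj: "F s \<inter> X h = {}" unfolding X_def Fs using FU_disj[OF _ sub_N dj] s by blast
  define P where "P = {f s m}"
  let ?L = "insl (F s) l1 \<tau> n2 l2"
  let ?R = "insr (F s) r1 \<tau> n2 P r2"
  have Y: "FU ({s} \<union> sub h) = F s \<union> X h" unfolding FU_Un X_def Fs ..
  have lay: "lay (F s \<union> X h) (n1 + n2) ?L ?R" by (rule ins_lay[OF B(1) G(1) tau disj])
  have mm: "m \<in> {lo s..hi s}" using atin[OF hQ(1)] hQ m by simp
  have cr: "\<forall>e\<in>ET. e \<subseteq> F s \<union> X h \<longrightarrow> e \<subseteq> F s \<or> e \<subseteq> X h \<or>
        (\<exists>p q. e = {p, q} \<and> p \<in> P \<and> p \<in> F s \<and> l1 p \<le> \<tau> \<and> \<tau> \<le> r1 p \<and> q \<in> X h \<and> l2 q = 0)"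
  proof (intro ballI impI)
    fix e assume e: "e \<in> ET" "e \<subseteq> F s \<union> X h"
    from cross[of "{s}" h e] e s hN dj have
      "e \<subseteq> F s \<or> e \<subseteq> X h \<or> (h \<in> Q \<and> e = {f (par h) (at h), f h (cn h)})" unfolding X_def Fs by blast
    moreover have "f s m \<in> F s" using fF[OF mm] .
    moreover have "f h (cn h) \<in> X h" using fX[OF hN cnin[OF hQ(1)]] .
    ultimately show "e \<subseteq> F s \<or> e \<subseteq> X h \<or>
        (\<exists>p q. e = {p, q} \<and> p \<in> P \<and> p \<in> F s \<and> l1 p \<le> \<tau> \<and> \<tau> \<le> r1 p \<and> q \<in> X h \<and> l2 q = 0)"
      using B(6,7) G(5) hQ m unfolding P_def \<tau>_def by auto
  qed
  have eok: "eok ET (F s \<union> X h) ?L ?R" by (rule ins_eok[OF B(1) G(1) tau disj B(2) G(2) cr])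
  have cntb: "\<forall>t<n1+n2. cnt (F s \<union> X h) ?L ?R t \<le> W"
  proof (intro allI impI)
    fix t assume t: "t < n1 + n2"
    have "cnt (F s \<union> X h) ?L ?R (\<tau> + 1 + t') \<le> W" if "t' < n2" for t'
    proof -
      have "cnt (F s \<union> X h) ?L ?R (\<tau> + 1 + t') \<le> (if t' = 0 then card P else 0) + cnt (X h) l2 r2 t'"
        by (rule ins_cnt_mid_end[OF B(1) G(1) tau disj that]) (simp_all add: \<tau>_def P_def)
      then show ?thesis using G(3,4) that W unfolding P_def by (auto split: if_splits)
    qed
    moreover have "\<forall>t<n1. cnt (F s) l1 r1 t \<le> W" using B(3) W by fastforce
    ultimately show "cnt (F s \<union> X h) ?L ?R t \<le> W"
      using ins_cnt_bound[OF B(1) G(1) tau disj, of W P t] t by blast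
  qed
  have c0: "cnt (F s \<union> X h) ?L ?R 0 \<le> 3"
    using ins_cnt_lo[OF B(1) G(1) tau disj, of 0 P] B(4) by simp
  have lj: "?L (f s j) = 0" using fF[OF j] B(5) unfolding insl_def by simp
  have wit: "\<forall>i\<in>{lo s..hi s}. \<exists>\<tau>'<n1+n2. ?L (f s i) \<le> \<tau>' \<and> \<tau>' \<le> ?R (f s i) \<and> cnt (F s \<union> X h) ?L ?R \<tau>' \<le> 4"
  proof
    fix i assume i: "i \<in> {lo s..hi s}"
    obtain t where t: "t < n1" "l1 (f s i) \<le> t" "t \<le> r1 (f s i)" "cnt (F s) l1 r1 t \<le> 4"
      using B(8) i by blast
    have fi: "f s i \<in> F s" using fF[OF i] .
    have tt: "t \<le> \<tau>" using t unfolding \<tau>_def by simp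
    have al: "?L (f s i) \<le> (if t \<le> \<tau> then t else t + n2) \<and> (if t \<le> \<tau> then t else t + n2) \<le> ?R (f s i)"
      by (rule ins_alive1[OF B(1) G(1) tau disj fi t(2,3)])
    have "cnt (F s \<union> X h) ?L ?R t = cnt (F s) l1 r1 t"
      by (rule ins_cnt_lo[OF B(1) G(1) tau disj tt])
    then show "\<exists>\<tau>'<n1+n2. ?L (f s i) \<le> \<tau>' \<and> \<tau>' \<le> ?R (f s i) \<and> cnt (F s \<union> X h) ?L ?R \<tau>' \<le> 4"
      using tt al t by (intro exI[of _ t]) auto
  qed
  show ?thesis unfolding inv_def Y using lay eok cntb c0 lj wit by blast
qed

end

context tforest begin

lemma inv_good: "inv W s j A \<Longrightarrow> good W (FU A) (f s j)"
  unfolding inv_def good_def by blast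

lemma step:
  assumes light: "\<And>c j. c \<in> N \<Longrightarrow> \<not> Dn k c \<Longrightarrow> j \<in> {lo c..hi c} \<Longrightarrow> good (4*k) (X c) (f c j)"
  shows "s \<in> N \<Longrightarrow> \<not> Dn (Suc k) s \<Longrightarrow> j \<in> {lo s..hi s} \<Longrightarrow> good (4*k+4) (X s) (f s j)"
proof (induction "Max (dep ` N) + 1 - dep s" arbitrary: s j rule: less_induct)
  case less
  let ?W = "4*k+4"
  have s: "s \<in> N" and nD: "\<not> Dn (Suc k) s" and j: "j \<in> {lo s..hi s}" using less.prems by simp_all
  have chN: "c \<in> N" if "c \<in> ch s" for c using that QN by (auto simp: ch_iff)
  have chsmall: "Max (dep ` N) + 1 - dep c < Max (dep ` N) + 1 - dep s" if "c \<in> ch s" for c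
  proof -
    have "dep s < dep c" using that pardep by (auto simp: ch_iff)
    moreover have "dep c \<le> Max (dep ` N)" by (rule Max_ge) (use chN[OF that] finN in simp_all)
    ultimately show ?thesis by linarith
  qed
  have chnot: "\<not> Dn (Suc k) c" if "c \<in> ch s" for c using Dn_up[OF _ that] nD by blast
  have IHc: "good ?W (X c) (f c j')" if "c \<in> ch s" "j' \<in> {lo c..hi c}" for c j'
    using less.hyps[OF chsmall[OF that(1)] chN[OF that(1)] chnot[OF that(1)] that(2)] .
  define Hv where "Hv = {c \<in> ch s. Dn k c}"
  have Hv1: "c1 = c2" if "c1 \<in> Hv" "c2 \<in> Hv" for c1 c2
  proof (rule ccontr)
    assume "c1 \<noteq> c2"
    moreover have "c1 \<in> Q" "c2 \<in> Q" "par c1 = s" "par c2 = s" "Dn k c1" "Dn k c2"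
      using that unfolding Hv_def by (auto simp: ch_iff)
    ultimately have "Dn (Suc k) (par c1)" using Dsplit[of c1 c2 k] by simp
    then show False using nD \<open>par c1 = s\<close> by simp
  qed
  define Lt where "Lt = ch s - Hv"
  have "ch s \<subseteq> N" using chN by blast
  then have finch: "finite (ch s)" using finN by (rule finite_subset)
  have finLt: "finite Lt" unfolding Lt_def using finch by simp
  have HvLt: "ch s = Hv \<union> Lt" unfolding Lt_def Hv_def by blast
  have lo: "lo s \<in> {lo s..hi s}" using lohi[OF s] by simp
  have A0: "inv ?W s j ({s} \<union> \<Union>(sub ` Hv))"
  proof (cases "Hv = {}")
    case True
    obtain n l r where B: "lay (F s) n l r" "eok ET (F s) l r" "\<forall>t<n. cnt (F s) l r t \<le> 4" "cnt (F s) l r 0 \<le> 3"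
     "l (f s j) = 0" "\<forall>i\<in>{lo s..hi s}. \<exists>\<tau><n. l (f s i) \<le> \<tau> \<and> \<tau> \<le> r (f s i) \<and> cnt (F s) l r \<tau> \<le> 4"
      using base[OF s j lo] by blast
    have Fs: "FU ({s} \<union> \<Union>(sub ` Hv)) = F s" using True by (simp add: FU_def)
    have "\<forall>t<n. cnt (F s) l r t \<le> ?W" using B(3) by fastforce
    then show ?thesis unfolding inv_def Fs using B by blast
  next
    case False
    then obtain h where h: "h \<in> Hv" by blast
    then have Hvh: "Hv = {h}" using Hv1 by blast
    have hch: "h \<in> ch s" using h unfolding Hv_def by blast
    have hQ: "h \<in> Q" "par h = s" using hch by (auto simp: ch_iff)
    have m: "at h \<in> {lo s..hi s}" using atin[OF hQ(1)] hQ by simp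
    obtain n l r where B: "lay (F s) n l r" "eok ET (F s) l r" "\<forall>t<n. cnt (F s) l r t \<le> 4" "cnt (F s) l r 0 \<le> 3"
     "l (f s j) = 0" "r (f s (at h)) = n - 1" "l (f s (at h)) \<le> n - 1"
     "\<forall>i\<in>{lo s..hi s}. \<exists>\<tau><n. l (f s i) \<le> \<tau> \<and> \<tau> \<le> r (f s i) \<and> cnt (F s) l r \<tau> \<le> 4"
      using base[OF s j m] by blast
    have g: "good ?W (X h) (f h (cn h))" using IHc[OF hch cnin[OF hQ(1)]] .
    have "inv ?W s j ({s} \<union> sub h)"
      by (rule heavy_ins[OF B s j hch refl g]) simp
    then show ?thesis using Hvh by simp
  qed
  have ind: "C \<subseteq> Lt \<Longrightarrow> inv ?W s j ({s} \<union> \<Union>(sub ` Hv) \<union> \<Union>(sub ` C))" if "finite C" for C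
    using that
  proof (induction rule: finite_induct)
    case empty then show ?case using A0 by simp
  next
    case (insert x C)
    have xLt: "x \<in> Lt" and CL: "C \<subseteq> Lt" using insert.prems by auto
    have xch: "x \<in> ch s" using xLt HvLt by blast
    have xQ: "x \<in> Q" using xch by (simp add: ch_iff)
    have xN: "x \<in> N" using chN[OF xch] .
    let ?A = "{s} \<union> \<Union>(sub ` Hv) \<union> \<Union>(sub ` C)"
    have IH: "inv ?W s j ?A" using insert.IH CL by blast
    have AN: "?A \<subseteq> N" using s sub_N by blast
    have sA: "s \<in> ?A" by blast
    have dj: "?A \<inter> sub x = {}"
    proof -
      have "s \<notin> sub x" using not_sub_ch[OF xch] .
      moreover have "sub h \<inter> sub x = {}" if "h \<in> Hv" for h
      proof -
        have "h \<in> ch s" "h \<noteq> x" using that xLt unfolding Hv_def Lt_def by auto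
        then show ?thesis using sub_ch_disj xch by blast
      qed
      moreover have "sub c \<inter> sub x = {}" if "c \<in> C" for c
      proof -
        have "c \<in> ch s" "c \<noteq> x" using that CL insert.hyps HvLt by auto
        then show ?thesis using sub_ch_disj xch by blast
      qed
      ultimately show ?thesis by blast
    qed
    have nDk: "\<not> Dn k x" using xLt unfolding Lt_def Hv_def using xch by blast
    have g: "good (4*k) (X x) (f x (cn x))" using light[OF xN nDk cnin[OF xQ]] .
    have "inv ?W s j (?A \<union> sub x)"
      by (rule light_ins[OF IH AN sA s j xch dj g]) simp
    moreover have "?A \<union> sub x = {s} \<union> \<Union>(sub ` Hv) \<union> \<Union>(sub ` insert x C)" by blast
    ultimately show ?case by simp
  qed
  have "inv ?W s j ({s} \<union> \<Union>(sub ` Hv) \<union> \<Union>(sub ` Lt))" using ind[OF finLt] by blast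
  moreover have "{s} \<union> \<Union>(sub ` Hv) \<union> \<Union>(sub ` Lt) = sub s"
  proof -
    have "\<Union>(sub ` ch s) = \<Union>(sub ` Hv) \<union> \<Union>(sub ` Lt)" unfolding HvLt image_Un by simp
    then show ?thesis unfolding sub_decomp[OF s] by simp
  qed
  ultimately have "inv ?W s j (sub s)" by simp
  from inv_good[OF this] show ?case unfolding X_def .
qed

lemma main: "s \<in> N \<Longrightarrow> \<not> Dn (Suc k) s \<Longrightarrow> j \<in> {lo s..hi s} \<Longrightarrow> good (4*k+4) (X s) (f s j)"
proof (induction k arbitrary: s j)
  case 0
  have light: "\<And>c j. c \<in> N \<Longrightarrow> \<not> Dn 0 c \<Longrightarrow> j \<in> {lo c..hi c} \<Longrightarrow> good (4*0) (X c) (f c j)"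
    using D0 by blast
  show ?case using step[OF light] 0 by blast
next
  case (Suc k)
  have e4: "4 * Suc k = 4*k+4" by simp
  have light: "\<And>c j. c \<in> N \<Longrightarrow> \<not> Dn (Suc k) c \<Longrightarrow> j \<in> {lo c..hi c} \<Longrightarrow> good (4*(Suc k)) (X c) (f c j)"
    using Suc.IH unfolding e4 by blast
  show ?case using step[OF light] Suc.prems by simp
qed

lemma whole:
  assumes nD: "\<And>s. s \<in> N \<Longrightarrow> \<not> Dn (Suc k) s"
  shows "\<exists>n l r. lay (FU N) n l r \<and> eok ET (FU N) l r \<and> (\<forall>t<n. cnt (FU N) l r t \<le> 4*k+4)"
proof -
  let ?W = "4*k+4"
  have ind: "C \<subseteq> N - Q \<Longrightarrow> \<exists>n l r. lay (FU (\<Union>(sub ` C))) n l r \<and> eok ET (FU (\<Union>(sub ` C))) l r \<and>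
      (\<forall>t<n. cnt (FU (\<Union>(sub ` C))) l r t \<le> ?W)" if "finite C" for C
    using that
  proof (induction rule: finite_induct)
    case empty
    have "FU (\<Union>(sub ` {})) = {}" by (simp add: FU_def)
    moreover have "lay {} 1 (\<lambda>_. 0) (\<lambda>_. 0)" by (simp add: lay_def)
    moreover have "eok ET {} (\<lambda>_. 0) (\<lambda>_. 0)" by (auto simp: eok_def)
    moreover have "cnt {} (\<lambda>_. 0) (\<lambda>_. 0) t \<le> ?W" for t by (simp add: cnt_def)
    ultimately show ?case by metis
  next
    case (insert x C)
    let ?A = "\<Union>(sub ` C)"
    have xN: "x \<in> N" "x \<notin> Q" and CN: "C \<subseteq> N - Q" using insert.prems by auto
    have lox: "lo x \<in> {lo x..hi x}" using lohi[OF xN(1)] by simp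
    obtain n1 l1 r1 where I: "lay (FU ?A) n1 l1 r1" "eok ET (FU ?A) l1 r1" "\<forall>t<n1. cnt (FU ?A) l1 r1 t \<le> ?W"
      using insert.IH CN by blast
    obtain n2 l2 r2 where G: "lay (X x) n2 l2 r2" "eok ET (X x) l2 r2" "\<forall>t<n2. cnt (X x) l2 r2 t \<le> ?W"
      "cnt (X x) l2 r2 0 \<le> 3"
      using main[OF xN(1) nD[OF xN(1)] lox] unfolding good_def by blast
    have AN: "?A \<subseteq> N" using sub_N by blast
    have dj: "?A \<inter> sub x = {}"
    proof -
      have "sub c \<inter> sub x = {}" if "c \<in> C" for c
        using roots_disj[of c x] that CN xN insert.hyps by blast
      then show ?thesis by blast
    qed
    have disj: "FU ?A \<inter> X x = {}" unfolding X_def using FU_disj[OF AN sub_N dj] .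
    have n1: "0 < n1" using I(1) unfolding lay_def by blast
    define \<tau> where "\<tau> = n1 - 1"
    have tau: "\<tau> < n1" using n1 unfolding \<tau>_def by simp
    let ?L = "insl (FU ?A) l1 \<tau> n2 l2"
    let ?R = "insr (FU ?A) r1 \<tau> n2 {} r2"
    have lay: "lay (FU ?A \<union> X x) (n1 + n2) ?L ?R" by (rule ins_lay[OF I(1) G(1) tau disj])
    have cr: "\<forall>e\<in>ET. e \<subseteq> FU ?A \<union> X x \<longrightarrow> e \<subseteq> FU ?A \<or> e \<subseteq> X x \<or>
        (\<exists>p q. e = {p, q} \<and> p \<in> {} \<and> p \<in> FU ?A \<and> l1 p \<le> \<tau> \<and> \<tau> \<le> r1 p \<and> q \<in> X x \<and> l2 q = 0)"
      using cross[OF AN xN(1) dj] xN(2) unfolding X_def by blast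
    have eok: "eok ET (FU ?A \<union> X x) ?L ?R" by (rule ins_eok[OF I(1) G(1) tau disj I(2) G(2) cr])
    have cntb: "\<forall>t<n1+n2. cnt (FU ?A \<union> X x) ?L ?R t \<le> ?W"
    proof (intro allI impI)
      fix t assume t: "t < n1 + n2"
      have "cnt (FU ?A \<union> X x) ?L ?R (\<tau> + 1 + t') \<le> ?W" if "t' < n2" for t'
      proof -
        have A: "cnt (FU ?A \<union> X x) ?L ?R (\<tau> + 1 + t') \<le> (if t' = 0 then card ({}::'t set) else 0) + cnt (X x) l2 r2 t'"
          by (rule ins_cnt_mid_end[OF I(1) G(1) tau disj that]) (simp_all add: \<tau>_def)
        have B: "(if t' = 0 then card ({}::'t set) else 0) = 0" by simp
        have C: "cnt (X x) l2 r2 t' \<le> ?W" using G(3) that by blast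
        from A C show ?thesis unfolding B by simp
      qed
      then show "cnt (FU ?A \<union> X x) ?L ?R t \<le> ?W"
        using ins_cnt_bound[OF I(1) G(1) tau disj, of ?W "{}" t] I(3) t by blast
    qed
    have Y: "FU (\<Union>(sub ` insert x C)) = FU ?A \<union> X x" by (simp add: FU_Un X_def Un_commute)
    show ?case unfolding Y using lay eok cntb by blast
  qed
  have "\<Union>(sub ` (N - Q)) = N" using root_exists sub_N by blast
  then show ?thesis using ind[of "N - Q"] finN by simp
qed

end

lemma lay_pd:
  assumes L: "lay Y n l r" and E: "eok E Y l r" and EY: "\<forall>e\<in>E. e \<subseteq> Y" and W: "\<forall>t<n. cnt Y l r t \<le> W"
  shows "\<exists>bs. is_path_decomp Y E bs \<and> pd_width bs \<le> W - 1"
proof -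
  define bs where "bs = map (\<lambda>t. {u\<in>Y. l u \<le> t \<and> t \<le> r u}) [0..<n]"
  have n: "0 < n" "finite Y" "\<forall>u\<in>Y. l u \<le> r u \<and> r u < n" using L unfolding lay_def by auto
  have len: "length bs = n" unfolding bs_def by simp
  have nth: "i < n \<Longrightarrow> bs ! i = {u\<in>Y. l u \<le> i \<and> i \<le> r u}" for i unfolding bs_def by simp
  have pd: "is_path_decomp Y E bs"
    unfolding is_path_decomp_def
  proof (intro conjI)
    show "bs \<noteq> []" using n len by auto
    show "\<forall>B\<in>set bs. B \<subseteq> Y" unfolding bs_def by auto
    show "\<forall>u\<in>Y. \<exists>i<length bs. u \<in> bs ! i"
    proof
      fix u assume u: "u \<in> Y"
      then have "l u < n" "u \<in> bs ! (l u)" using n nth[of "l u"] by auto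
      then show "\<exists>i<length bs. u \<in> bs ! i" using len by blast
    qed
    show "\<forall>e\<in>E. \<exists>i<length bs. e \<subseteq> bs ! i"
    proof
      fix e assume e: "e \<in> E"
      then have eY: "e \<subseteq> Y" using EY by blast
      obtain t where t: "\<forall>u\<in>e. l u \<le> t \<and> t \<le> r u" using E e eY unfolding eok_def by blast
      show "\<exists>i<length bs. e \<subseteq> bs ! i"
      proof (cases "e = {}")
        case True then show ?thesis using len n by auto
      next
        case False
        then obtain u where "u \<in> e" by blast
        then have tn: "t < n" using t eY n by fastforce
        then have "e \<subseteq> bs ! t" using nth t eY by auto
        then show ?thesis using tn len by auto
      qed
    qed
    show "\<forall>u i j k. i \<le> j \<and> j \<le> k \<and> k < length bs \<and> u \<in> bs ! i \<and> u \<in> bs ! k \<longrightarrow> u \<in> bs ! j"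
      using nth len by auto
  qed
  have "Max (card ` set bs) \<le> W"
  proof (rule Max.boundedI)
    show "finite (card ` set bs)" by simp
    show "card ` set bs \<noteq> {}" using n len by auto
    show "a \<le> W" if "a \<in> card ` set bs" for a
    proof -
      from that
      obtain i where "i < n" "a = card (bs ! i)" using len by (auto simp: in_set_conv_nth)
      then show "a \<le> W" using nth W unfolding cnt_def by simp
    qed
  qed
  then have "pd_width bs \<le> W - 1" unfolding pd_width_def by simp
  with pd show ?thesis by blast
qed

definition rooted :: "'n set \<Rightarrow> 'n set set \<Rightarrow> ('n \<Rightarrow> 'n) \<Rightarrow> ('n \<Rightarrow> nat) \<Rightarrow> 'n \<Rightarrow> bool" where
 "rooted NN Ed par dep z \<longleftrightarrow> z \<in> NN \<and> (\<forall>y\<in>NN-{z}. par y \<in> NN \<and> dep (par y) < dep y) \<and>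
    Ed = {{y, par y} | y. y \<in> NN - {z}}"

lemma rooted_single: "rooted {a} {} par dep a"
  unfolding rooted_def by auto

lemma memg: "u \<in> A \<Longrightarrow> {u, g u} \<in> {{u, g u} | u. u \<in> A}"
  by blast

lemma spqr_struct:
  "is_spqr_tree V E S \<Longrightarrow> finite (nodes S) \<and> nodes S \<noteq> {} \<and> (\<forall>z\<in>nodes S. \<exists>par dep. rooted (nodes S) (tedges S) par dep z)"
proof (induction rule: is_spqr_tree.induct)
  case (cycle V E S a)
  then show ?case using rooted_single by fastforce
next
  case (rigid V E S a)
  then show ?case using rooted_single by fastforce
next
  case (split V E x y Cs Sub aC p S)
  have finCs: "finite Cs" using split.hyps(10) by (metis card.infinite not_numeral_le_zero)
  have IH: "\<forall>C\<in>Cs. finite (nodes (Sub C)) \<and> nodes (Sub C) \<noteq> {} \<and>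
      (\<forall>z\<in>nodes (Sub C). \<exists>par dep. rooted (nodes (Sub C)) (tedges (Sub C)) par dep z)"
    using split.IH by blast
  have aC: "\<And>C. C \<in> Cs \<Longrightarrow> aC C \<in> nodes (Sub C)" using split.hyps(11) by blast
  have dj: "\<And>C D. C \<in> Cs \<Longrightarrow> D \<in> Cs \<Longrightarrow> C \<noteq> D \<Longrightarrow> nodes (Sub C) \<inter> nodes (Sub D) = {}" using split.hyps(12) by blast
  have pn: "\<And>C. C \<in> Cs \<Longrightarrow> p \<notin> nodes (Sub C)" using split.hyps(13) by blast
  have nodesS: "nodes S = insert p (\<Union>C\<in>Cs. nodes (Sub C))" using split.hyps(14) .
  have tedgesS: "tedges S = (\<Union>C\<in>Cs. tedges (Sub C)) \<union> {{p, aC C} | C. C \<in> Cs}" using split.hyps(15) .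
  have fin: "finite (nodes S)" using nodesS finCs IH by simp
  have roots: "\<exists>par dep. rooted (nodes S) (tedges S) par dep z" if z: "z \<in> nodes S" for z
  proof -
    define cof where "cof u = (SOME C. C \<in> Cs \<and> u \<in> nodes (Sub C))" for u
    have cofI: "cof u = C" if "C \<in> Cs" "u \<in> nodes (Sub C)" for u C
    proof -
      have "cof u \<in> Cs \<and> u \<in> nodes (Sub (cof u))" unfolding cof_def by (rule someI[of _ C]) (use that in blast)
      then show ?thesis using dj that by blast
    qed
    define rc where "rc C = (if z \<in> nodes (Sub C) then z else aC C)" for C
    have rcin: "C \<in> Cs \<Longrightarrow> rc C \<in> nodes (Sub C)" for C using aC unfolding rc_def by auto
    have "\<forall>C\<in>Cs. \<exists>pr dp. rooted (nodes (Sub C)) (tedges (Sub C)) pr dp (rc C)" using IH rcin by blast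
    then obtain PR where "\<forall>C\<in>Cs. \<exists>dp. rooted (nodes (Sub C)) (tedges (Sub C)) (PR C) dp (rc C)"
      by (metis (no_types) bchoice)
    then obtain DP where RT: "\<forall>C\<in>Cs. rooted (nodes (Sub C)) (tedges (Sub C)) (PR C) (DP C) (rc C)"
      by (metis (no_types) bchoice)
    have RT1: "PR C u \<in> nodes (Sub C) \<and> DP C (PR C u) < DP C u" if "C \<in> Cs" "u \<in> nodes (Sub C)" "u \<noteq> rc C" for C u
      using RT that unfolding rooted_def by blast
    have RT2: "tedges (Sub C) = {{u, PR C u} | u. u \<in> nodes (Sub C) - {rc C}}" if "C \<in> Cs" for C
      using RT that unfolding rooted_def by blast
    define base where "base = (if z = p then 0 else DP (cof z) (aC (cof z)) + 1)"
    define par where "par u = (if u = p then aC (cof z) else if u = rc (cof u) then p else PR (cof u) u)" for u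
    define dep where "dep u = (if u = p then base else if z \<in> nodes (Sub (cof u)) then DP (cof u) u
        else DP (cof u) u + base + 1)" for u
    have zC: "z \<noteq> p \<Longrightarrow> \<exists>C0\<in>Cs. z \<in> nodes (Sub C0)" using z nodesS by blast
    have dec: "par u \<in> nodes S \<and> dep (par u) < dep u" if u: "u \<in> nodes S - {z}" for u
    proof (cases "u = p")
      case True
      then have zp: "z \<noteq> p" using u by blast
      then obtain C0 where C0: "C0 \<in> Cs" "z \<in> nodes (Sub C0)" using zC by blast
      have cz: "cof z = C0" using cofI C0 by blast
      have pa: "par u = aC C0" using True cz unfolding par_def by simp
      have a0: "aC C0 \<in> nodes (Sub C0)" "aC C0 \<noteq> p" using aC[OF C0(1)] pn[OF C0(1)] by auto
      have ca: "cof (aC C0) = C0" using cofI C0(1) a0(1) by blast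
      have "dep (aC C0) = DP C0 (aC C0)" unfolding dep_def using a0 ca C0 by simp
      moreover have "dep u = DP C0 (aC C0) + 1" unfolding dep_def base_def using True zp cz by simp
      ultimately show ?thesis using pa a0 C0 nodesS by auto
    next
      case False
      then obtain C where C: "C \<in> Cs" "u \<in> nodes (Sub C)" using u nodesS by blast
      have cu: "cof u = C" using cofI C by blast
      show ?thesis
      proof (cases "u = rc C")
        case True
        have uz: "u \<noteq> z" using u by blast
        then have zn: "z \<notin> nodes (Sub C)" using True unfolding rc_def by auto
        have "par u = p" unfolding par_def using False True cu by simp
        moreover have "dep p = base" unfolding dep_def by simp
        moreover have "dep u = DP C u + base + 1" unfolding dep_def using False cu zn by simp
        ultimately show ?thesis using nodesS by simp
      next
        case nr: False
        have pu: "par u = PR C u" unfolding par_def using False nr cu by simp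
        have r1: "PR C u \<in> nodes (Sub C)" "DP C (PR C u) < DP C u" using RT1[OF C nr] by auto
        have np: "PR C u \<noteq> p" using r1 pn[OF C(1)] by blast
        have cp: "cof (PR C u) = C" using cofI C(1) r1(1) by blast
        have "dep (PR C u) < dep u" unfolding dep_def using np cp cu False r1(2) by simp
        then show ?thesis using pu r1 C nodesS by auto
      qed
    qed
    have mem: "{u, par u} \<in> {{u, par u} | u. u \<in> nodes S - {z}}" if "u \<in> nodes S - {z}" for u
      using that by blast
    have edges: "tedges S = {{u, par u} | u. u \<in> nodes S - {z}}"
    proof
      show "tedges S \<subseteq> {{u, par u} | u. u \<in> nodes S - {z}}"
      proof
        fix e assume "e \<in> tedges S"
        then consider (a) C where "C \<in> Cs" "e \<in> tedges (Sub C)" | (b) C where "C \<in> Cs" "e = {p, aC C}"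
          using tedgesS by blast
        then show "e \<in> {{u, par u} | u. u \<in> nodes S - {z}}"
        proof cases
          case a
          then obtain u where u: "u \<in> nodes (Sub C)" "u \<noteq> rc C" "e = {u, PR C u}" using RT2 by blast
          have uz: "u \<noteq> z" using u unfolding rc_def by (auto split: if_splits)
          have up: "u \<noteq> p" using u pn a by blast
          have cu: "cof u = C" using cofI a u by blast
          have pu: "par u = PR C u" unfolding par_def using up u cu by simp
          have un: "u \<in> nodes S - {z}" using u uz a nodesS by blast
          show ?thesis unfolding u(3) pu[symmetric] using mem[OF un] .
        next
          case b
          show ?thesis
          proof (cases "z \<in> nodes (Sub C)")
            case True
            have zp: "z \<noteq> p" using True pn b by blast
            have "cof z = C" using cofI b True by blast
            then have pp: "par p = aC C" unfolding par_def by simp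
            have un: "p \<in> nodes S - {z}" using zp nodesS by blast
            show ?thesis unfolding b(2) pp[symmetric] using mem[OF un] .
          next
            case False
            have a0: "aC C \<in> nodes (Sub C)" "aC C \<noteq> p" using aC[OF b(1)] pn[OF b(1)] by auto
            have ca: "cof (aC C) = C" using cofI b(1) a0(1) by blast
            have "rc C = aC C" using False unfolding rc_def by simp
            then have "par (aC C) = p" unfolding par_def using a0 ca by simp
            moreover have "aC C \<noteq> z" using False a0 by blast
            ultimately have ee: "{aC C, par (aC C)} = e" and un: "aC C \<in> nodes S - {z}" using b a0 nodesS by auto
            show ?thesis unfolding ee[symmetric] using mem[OF un] .
          qed
        qed
      qed
      show "{{u, par u} | u. u \<in> nodes S - {z}} \<subseteq> tedges S"
      proof
        fix e assume "e \<in> {{u, par u} | u. u \<in> nodes S - {z}}"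
        then obtain u where u: "u \<in> nodes S - {z}" "e = {u, par u}" by blast
        show "e \<in> tedges S"
        proof (cases "u = p")
          case True
          then obtain C0 where C0: "C0 \<in> Cs" "z \<in> nodes (Sub C0)" using zC u by blast
          have "cof z = C0" using cofI C0 by blast
          then have "e = {p, aC C0}" using u True unfolding par_def by simp
          then show ?thesis using tedgesS C0 by blast
        next
          case False
          then obtain C where C: "C \<in> Cs" "u \<in> nodes (Sub C)" using u nodesS by blast
          have cu: "cof u = C" using cofI C by blast
          show ?thesis
          proof (cases "u = rc C")
            case True
            have "z \<notin> nodes (Sub C)" using True u unfolding rc_def by auto
            then have "u = aC C" using True unfolding rc_def by simp
            moreover have "par u = p" unfolding par_def using False True cu by simp
            ultimately have "e = {p, aC C}" using u by auto
            then show ?thesis using tedgesS C by blast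
          next
            case nr: False
            have pu: "par u = PR C u" unfolding par_def using False nr cu by simp
            have "u \<in> nodes (Sub C) - {rc C}" using C nr by blast
            from memg[OF this, of "PR C"] have "e \<in> tedges (Sub C)" unfolding RT2[OF C(1)] u(2) pu .
            then show ?thesis using tedgesS C by blast
          qed
        qed
      qed
    qed
    have "rooted (nodes S) (tedges S) par dep z" unfolding rooted_def using z dec edges by blast
    then show ?thesis by blast
  qed
  show ?case using fin roots nodesS by blast
qed

lemma pow4: "(2::nat) ^ Suc (Suc m) = 4 * 2 ^ m" by simp

lemma pow_ge2: "(2::nat) \<le> 2 ^ Suc m"
proof -
  have "(1::nat) \<le> 2 ^ m" by simp
  then show ?thesis by simp
qed

lemma arith4: "(a::nat) \<le> x \<Longrightarrow> 2 \<le> x \<Longrightarrow> a + 4 \<le> 4 * x" by linarith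

lemma pow_bound: "1 \<le> h \<Longrightarrow> 4 * h + 2 \<le> (2::nat) ^ (2 * h + 1)"
proof (induction h)
  case 0 then show ?case by simp
next
  case (Suc n)
  have ex: "2 * Suc n + 1 = Suc (Suc (2 * n + 1))" by simp
  have e: "(2::nat) ^ (2 * Suc n + 1) = 4 * 2 ^ (2 * n + 1)" unfolding ex by (rule pow4)
  have g: "(2::nat) \<le> 2 ^ (2 * n + 1)" using pow_ge2[of "2 * n"] by simp
  show ?case
  proof (cases "n = 0")
    case True then show ?thesis by simp
  next
    case False
    then have "4 * n + 2 \<le> (2::nat) ^ (2 * n + 1)" using Suc.IH by simp
    then have A: "(4 * n + 2) + 4 \<le> 4 * (2::nat) ^ (2 * n + 1)" by (rule arith4[OF _ g])
    have B: "4 * Suc n + 2 = (4 * n + 2) + 4" by simp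
    show ?thesis unfolding e B by (rule A)
  qed
qed

lemma pd_parts:
  assumes "is_path_decomp V E bs"
  shows "bs \<noteq> []" "\<forall>B\<in>set bs. B \<subseteq> V" "\<forall>u\<in>V. \<exists>i<length bs. u \<in> bs ! i"
    "\<forall>e\<in>E. \<exists>i<length bs. e \<subseteq> bs ! i"
    "\<forall>u i j k. i \<le> j \<and> j \<le> k \<and> k < length bs \<and> u \<in> bs ! i \<and> u \<in> bs ! k \<longrightarrow> u \<in> bs ! j"
proof -
  note A = assms[unfolded is_path_decomp_def]
  show "bs \<noteq> []" using A by (rule conjunct1)
  show "\<forall>B\<in>set bs. B \<subseteq> V" using A by (rule conjunct1[OF conjunct2])
  show "\<forall>u\<in>V. \<exists>i<length bs. u \<in> bs ! i" using A by (rule conjunct1[OF conjunct2[OF conjunct2]])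
  show "\<forall>e\<in>E. \<exists>i<length bs. e \<subseteq> bs ! i" using A by (rule conjunct1[OF conjunct2[OF conjunct2[OF conjunct2]]])
  show "\<forall>u i j k. i \<le> j \<and> j \<le> k \<and> k < length bs \<and> u \<in> bs ! i \<and> u \<in> bs ! k \<longrightarrow> u \<in> bs ! j"
    using A by (rule conjunct2[OF conjunct2[OF conjunct2[OF conjunct2]]])
qed

lemma pd_cover: "is_path_decomp V E bs \<Longrightarrow> u \<in> V \<Longrightarrow> \<exists>i<length bs. u \<in> bs ! i"
  using pd_parts(3) by blast

lemma pd_conv: "is_path_decomp V E bs \<Longrightarrow> i \<le> j \<Longrightarrow> j \<le> k \<Longrightarrow> k < length bs \<Longrightarrow> u \<in> bs ! i \<Longrightarrow> u \<in> bs ! k \<Longrightarrow> u \<in> bs ! j"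
  using pd_parts(5) by blast

lemma pd_bag: "is_path_decomp V E bs \<Longrightarrow> i < length bs \<Longrightarrow> bs ! i \<subseteq> V"
  using pd_parts(2) by (metis nth_mem)

lemma pathwidth_le: "is_path_decomp V E bs \<Longrightarrow> pathwidth V E \<le> pd_width bs"
  unfolding pathwidth_def by (rule Least_le) blast

lemma T_sub_verts_iff: "t \<in> T_sub_verts S pd v \<longleftrightarrow>
   (\<exists>a i. t = Inl (a, i) \<and> a \<in> nodes S \<and> ntype S a \<noteq> PNode \<and> i < length (pd a) \<and> v \<in> pd a ! i) \<or>
   (\<exists>b. t = Inr b \<and> b \<in> nodes S \<and> ntype S b = PNode \<and> v \<in> hverts S b)"
  unfolding T_sub_verts_def T_verts_def T_bag_def by auto


theorem lemma15:
  fixes V :: "'v set" and E :: "'v set set" and S :: "('n, 'v) spqr"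
    and pd :: "'n \<Rightarrow> 'v set list" and att :: "'n \<Rightarrow> 'n \<Rightarrow> nat"
    and v :: 'v and h :: nat
  assumes "k_connected 2 V E"
    and "is_spqr_tree V E S"
    and "spqr_td S pd att"
    and "v \<in> V"
    and "h \<ge> 1"
    and "pathwidth (T_sub_verts S pd v) (T_sub_edges S pd att v) > 2 ^ (2 * h + 1) - 3"
  shows "contains_subdivision (cbt_verts h) (cbt_edges h) (spqr_sub_verts S v) (spqr_sub_edges S v)"
proof (rule ccontr)
  assume nsub: "\<not> contains_subdivision (cbt_verts h) (cbt_edges h) (spqr_sub_verts S v) (spqr_sub_edges S v)"
  note st = spqr_struct[OF assms(2)]
  have finS: "finite (nodes S)" using st by blast
  obtain z where z: "z \<in> nodes S" using st by blast
  obtain par dep where rt: "rooted (nodes S) (tedges S) par dep z" using st z by blast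
  have rtA: "\<forall>y\<in>nodes S - {z}. par y \<in> nodes S \<and> dep (par y) < dep y"
    using rt unfolding rooted_def by (rule conjunct1[OF conjunct2])
  have rt1: "y \<in> nodes S - {z} \<Longrightarrow> par y \<in> nodes S \<and> dep (par y) < dep y" for y
    using rtA by blast
  have rtE: "tedges S = {{y, par y} | y. y \<in> nodes S - {z}}"
    using rt unfolding rooted_def by (rule conjunct2[OF conjunct2])
  define N' where "N' = spqr_sub_verts S v"
  define Q' where "Q' = {y \<in> N'. y \<noteq> z \<and> par y \<in> N'}"
  have N'S: "N' \<subseteq> nodes S" unfolding N'_def spqr_sub_verts_def by blast
  have N'iff: "a \<in> N' \<longleftrightarrow> a \<in> nodes S \<and> v \<in> hverts S a" for a unfolding N'_def spqr_sub_verts_def by blast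
  have fo: "forest N' Q' par dep"
  proof
    show "finite N'" using finite_subset[OF N'S finS] .
    show "Q' \<subseteq> N'" unfolding Q'_def by blast
    show "par y \<in> N'" if "y \<in> Q'" for y using that unfolding Q'_def by blast
    show "dep (par y) < dep y" if "y \<in> Q'" for y using that rt1 N'S unfolding Q'_def by blast
  qed
  interpret forest N' Q' par dep by (rule fo)
  have EdF_eq: "EdF = spqr_sub_edges S v"
  proof
    show "EdF \<subseteq> spqr_sub_edges S v"
    proof
      fix e assume "e \<in> EdF"
      then obtain y where y: "y \<in> Q'" "e = {y, par y}" unfolding EdF_def by blast
      then have "y \<in> nodes S - {z}" using N'S unfolding Q'_def by blast
      then have "{y, par y} \<in> tedges S" unfolding rtE by (rule memg)
      then have "e \<in> tedges S" using y(2) by simp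
      moreover have "e \<subseteq> N'" using y unfolding Q'_def by blast
      ultimately show "e \<in> spqr_sub_edges S v" unfolding spqr_sub_edges_def induced_edges_def N'_def by blast
    qed
    show "spqr_sub_edges S v \<subseteq> EdF"
    proof
      fix e assume "e \<in> spqr_sub_edges S v"
      then have e: "e \<in> tedges S" "e \<subseteq> N'" unfolding spqr_sub_edges_def induced_edges_def N'_def by auto
      from e(1) have "e \<in> {{y, par y} | y. y \<in> nodes S - {z}}" unfolding rtE .
      then obtain y where y: "y \<in> nodes S - {z}" "e = {y, par y}" by blast
      then have "y \<in> Q'" using e unfolding Q'_def by blast
      then have "{y, par y} \<in> EdF" unfolding EdF_def by (rule memg)
      then show "e \<in> EdF" using y(2) by simp
    qed
  qed
  have nD: "\<not> Dn h s" if "s \<in> N'" for s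
  proof
    assume "Dn h s"
    then have "contains_subdivision (cbt_verts h) (cbt_edges h) N' EdF" by (rule Dn_subdiv)
    then show False using nsub unfolding EdF_eq N'_def by simp
  qed
  obtain k where hk: "h = Suc k" using assms(5) by (cases h) auto
  have tdA: "\<forall>a\<in>nodes S. ntype S a \<noteq> PNode \<longrightarrow>
        is_path_decomp (hverts S a) (set_mset (hreal S a + hvirt S a)) (pd a) \<and>
        pd_width (pd a) = pathwidth (hverts S a) (set_mset (hreal S a + hvirt S a))"
    using assms(3) unfolding spqr_td_def Let_def by (rule conjunct1)
  have tdB: "\<forall>b\<in>nodes S. ntype S b = PNode \<longrightarrow>
        (\<forall>a\<in>nodes S. {a, b} \<in> tedges S \<and> ntype S a \<noteq> PNode \<longrightarrow>
           att b a < length (pd a) \<and> hverts S b \<subseteq> pd a ! att b a)"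
    using assms(3) unfolding spqr_td_def by (rule conjunct2)
  have td1: "is_path_decomp (hverts S a) (set_mset (hreal S a + hvirt S a)) (pd a)"
    if "a \<in> nodes S" "ntype S a \<noteq> PNode" for a
    using tdA that by blast
  have td2: "att b a < length (pd a) \<and> hverts S b \<subseteq> pd a ! att b a"
    if "b \<in> nodes S" "ntype S b = PNode" "a \<in> nodes S" "{a, b} \<in> tedges S" "ntype S a \<noteq> PNode" for a b
    using tdB that by blast
  define I where "I a = {i. i < length (pd a) \<and> v \<in> pd a ! i}" for a
  define lo where "lo a = (if ntype S a = PNode then 0 else Min (I a))" for a
  define hi where "hi a = (if ntype S a = PNode then 0 else Max (I a))" for a
  define f :: "'n \<Rightarrow> nat \<Rightarrow> 'n \<times> nat + 'n" where "f a i = (if ntype S a = PNode then Inr a else Inl (a, i))" for a i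
  define at where "at y = (if ntype S (par y) \<noteq> PNode \<and> ntype S y = PNode then att y (par y) else lo (par y))" for y
  define cn where "cn y = (if ntype S y \<noteq> PNode \<and> ntype S (par y) = PNode then att (par y) y else lo y)" for y
  have Ifin: "finite (I a)" for a unfolding I_def by simp
  have Ine: "I a \<noteq> {}" if "a \<in> N'" "ntype S a \<noteq> PNode" for a
  proof -
    have "is_path_decomp (hverts S a) (set_mset (hreal S a + hvirt S a)) (pd a)" using td1 that N'S by blast
    moreover have "v \<in> hverts S a" using that N'iff by blast
    ultimately have "\<exists>i<length (pd a). v \<in> pd a ! i" by (rule pd_cover)
    then show ?thesis unfolding I_def by auto
  qed
  have Iiff: "i \<in> {lo a..hi a} \<longleftrightarrow> i \<in> I a" if "a \<in> N'" "ntype S a \<noteq> PNode" for a i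
  proof
    assume i: "i \<in> {lo a..hi a}"
    have pdd: "is_path_decomp (hverts S a) (set_mset (hreal S a + hvirt S a)) (pd a)" using td1 that N'S by blast
    have mn: "Min (I a) \<in> I a" "Max (I a) \<in> I a" using Ifin Ine[OF that] by auto
    have "Min (I a) \<le> i" "i \<le> Max (I a)" using i that unfolding lo_def hi_def by auto
    moreover have "Max (I a) < length (pd a)" "v \<in> pd a ! Min (I a)" "v \<in> pd a ! Max (I a)" using mn unfolding I_def by auto
    ultimately have "v \<in> pd a ! i" using pd_conv[OF pdd, of "Min (I a)" i "Max (I a)" v] by blast
    moreover have "i < length (pd a)" using \<open>i \<le> Max (I a)\<close> \<open>Max (I a) < length (pd a)\<close> by simp
    ultimately show "i \<in> I a" unfolding I_def by blast
  next
    assume "i \<in> I a"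
    then show "i \<in> {lo a..hi a}" using Ifin that unfolding lo_def hi_def by auto
  qed
  have bag_sub: "pd a ! i \<subseteq> hverts S a" if "a \<in> nodes S" "ntype S a \<noteq> PNode" "i < length (pd a)" for a i
    using pd_bag[OF td1[OF that(1,2)] that(3)] .
  have edge_in: "{y, par y} \<in> tedges S" if "y \<in> Q'" for y
  proof -
    have "y \<in> nodes S - {z}" using that N'S unfolding Q'_def by blast
    then show ?thesis unfolding rtE by (rule memg)
  qed
  have QN': "y \<in> Q' \<Longrightarrow> y \<in> N' \<and> par y \<in> N'" for y unfolding Q'_def by blast
  have Pfib: "lo s = 0" "hi s = 0" if "ntype S s = PNode" for s using that unfolding lo_def hi_def by simp_all
  have fP: "f s i = Inr s" if "ntype S s = PNode" for s i using that unfolding f_def by simp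
  have fnP: "f s i = Inl (s, i)" if "ntype S s \<noteq> PNode" for s i using that unfolding f_def by simp
  have lohi: "lo s \<le> hi s" if "s \<in> N'" for s
  proof (cases "ntype S s = PNode")
    case True then show ?thesis using Pfib by simp
  next
    case False
    have "Max (I s) \<in> I s" using Max_in[OF Ifin Ine[OF that False]] .
    then have "Min (I s) \<le> Max (I s)" using Min_le[OF Ifin] by blast
    then show ?thesis using False unfolding lo_def hi_def by simp
  qed
  have finj: "inj_on (f s) {lo s..hi s}" if "s \<in> N'" for s
  proof (cases "ntype S s = PNode")
    case True then show ?thesis using Pfib[OF True] by simp
  next
    case False then show ?thesis unfolding inj_on_def using fnP[OF False] by simp
  qed
  have fdisj: "s = s'" if "f s i = f s' i'" for s s' i i'
    using that unfolding f_def by (auto split: if_splits)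
  have inQ: "y \<in> nodes S" "par y \<in> nodes S" "v \<in> hverts S y" "v \<in> hverts S (par y)" if "y \<in> Q'" for y
    using that QN' N'iff by blast+
  have atin: "at y \<in> {lo (par y)..hi (par y)}" if y: "y \<in> Q'" for y
  proof (cases "ntype S (par y) \<noteq> PNode \<and> ntype S y = PNode")
    case True
    have e: "{par y, y} \<in> tedges S" using edge_in[OF y] by (simp add: insert_commute)
    have T: "ntype S (par y) \<noteq> PNode" "ntype S y = PNode" using True by simp_all
    have "att y (par y) < length (pd (par y)) \<and> hverts S y \<subseteq> pd (par y) ! att y (par y)"
      by (rule td2[OF inQ(1)[OF y] T(2) inQ(2)[OF y] e T(1)])
    then have "att y (par y) \<in> I (par y)" using inQ[OF y] unfolding I_def by blast
    then show ?thesis using Iiff[of "par y" "att y (par y)"] True QN'[OF y] unfolding at_def by simp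
  next
    case False
    have "at y = lo (par y)" unfolding at_def using False by (rule if_not_P)
    then show ?thesis using lohi[of "par y"] QN'[OF y] by simp
  qed
  have cnin: "cn y \<in> {lo y..hi y}" if y: "y \<in> Q'" for y
  proof (cases "ntype S y \<noteq> PNode \<and> ntype S (par y) = PNode")
    case True
    have e: "{y, par y} \<in> tedges S" using edge_in[OF y] .
    have T: "ntype S y \<noteq> PNode" "ntype S (par y) = PNode" using True by simp_all
    have "att (par y) y < length (pd y) \<and> hverts S (par y) \<subseteq> pd y ! att (par y) y"
      by (rule td2[OF inQ(2)[OF y] T(2) inQ(1)[OF y] e T(1)])
    then have "att (par y) y \<in> I y" using inQ[OF y] unfolding I_def by blast
    then show ?thesis using Iiff[of y "att (par y) y"] True QN'[OF y] unfolding cn_def by simp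
  next
    case False
    have "cn y = lo y" unfolding cn_def using False by (rule if_not_P)
    then show ?thesis using lohi[of y] QN'[OF y] by simp
  qed
  have XX: "(\<Union>s\<in>N'. f s ` {lo s..hi s}) = T_sub_verts S pd v"
  proof
    show "(\<Union>s\<in>N'. f s ` {lo s..hi s}) \<subseteq> T_sub_verts S pd v"
    proof
      fix u assume "u \<in> (\<Union>s\<in>N'. f s ` {lo s..hi s})"
      then obtain s i where si: "s \<in> N'" "i \<in> {lo s..hi s}" "u = f s i" by blast
      show "u \<in> T_sub_verts S pd v"
      proof (cases "ntype S s = PNode")
        case True
        have u: "u = Inr s" using si(3) fP[OF True] by simp
        have "s \<in> nodes S" "v \<in> hverts S s" using si(1) N'iff by blast+
        then show ?thesis unfolding T_sub_verts_iff u using True by blast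
      next
        case False
        then have "i \<in> I s" using Iiff[OF si(1) False] si(2) by blast
        then have i: "i < length (pd s)" "v \<in> pd s ! i" unfolding I_def by auto
        have u: "u = Inl (s, i)" using si(3) fnP[OF False] by simp
        have "s \<in> nodes S" using si(1) N'iff by blast
        then show ?thesis unfolding T_sub_verts_iff u using False i by blast
      qed
    qed
    show "T_sub_verts S pd v \<subseteq> (\<Union>s\<in>N'. f s ` {lo s..hi s})"
    proof
      fix u assume "u \<in> T_sub_verts S pd v"
      then consider (a) a i where "u = Inl (a, i)" "a \<in> nodes S" "ntype S a \<noteq> PNode" "i < length (pd a)" "v \<in> pd a ! i"
        | (b) b where "u = Inr b" "b \<in> nodes S" "ntype S b = PNode" "v \<in> hverts S b"
        unfolding T_sub_verts_iff by blast
      then show "u \<in> (\<Union>s\<in>N'. f s ` {lo s..hi s})"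
      proof cases
        case a
        have aN: "a \<in> N'" using bag_sub[OF a(2,3,4)] a(5) a(2) N'iff by blast
        have "i \<in> I a" using a unfolding I_def by blast
        then have "i \<in> {lo a..hi a}" using Iiff[OF aN a(3)] by blast
        then have "f a i \<in> f a ` {lo a..hi a}" by (rule imageI)
        moreover have "u = f a i" using a(1) fnP[OF a(3)] by simp
        ultimately show ?thesis using aN by blast
      next
        case b
        have bN: "b \<in> N'" using b N'iff by blast
        have "0 \<in> {lo b..hi b}" using Pfib[OF b(3)] by simp
        then have "f b 0 \<in> f b ` {lo b..hi b}" by (rule imageI)
        moreover have "u = f b 0" using b(1) fP[OF b(3)] by simp
        ultimately show ?thesis using bN by blast
      qed
    qed
  qed
  have ecls: "(\<exists>s i. s \<in> N' \<and> lo s \<le> i \<and> Suc i \<le> hi s \<and> e = {f s i, f s (Suc i)}) \<or>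
      (\<exists>y\<in>Q'. e = {f (par y) (at y), f y (cn y)})"
    if e: "e \<in> T_edges S pd att" "e \<subseteq> (\<Union>s\<in>N'. f s ` {lo s..hi s})" for e
  proof -
    have eT: "e \<subseteq> T_sub_verts S pd v" using e(2) XX by simp
    from e(1) consider (a) a i where "e = {Inl (a, i), Inl (a, Suc i)}" "a \<in> nodes S" "ntype S a \<noteq> PNode" "Suc i < length (pd a)"
      | (b) a b where "e = {Inr b, Inl (a, att b a)}" "a \<in> nodes S" "b \<in> nodes S" "ntype S b = PNode"
          "ntype S a \<noteq> PNode" "{a, b} \<in> tedges S"
      unfolding T_edges_def by blast
    then show ?thesis
    proof cases
      case a
      have "Inl (a, i) \<in> T_sub_verts S pd v" "Inl (a, Suc i) \<in> T_sub_verts S pd v" using eT a(1) by auto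
      then have v1: "v \<in> pd a ! i" "v \<in> pd a ! Suc i" unfolding T_sub_verts_iff by auto
      have il: "i < length (pd a)" using a(4) by simp
      have "v \<in> hverts S a" using bag_sub[OF a(2,3) il] v1(1) by blast
      then have aN: "a \<in> N'" using a(2) N'iff by blast
      have "i \<in> I a" "Suc i \<in> I a" using v1 a(4) unfolding I_def by auto
      then have "i \<in> {lo a..hi a}" "Suc i \<in> {lo a..hi a}" using Iiff[OF aN a(3)] by blast+
      moreover have "e = {f a i, f a (Suc i)}" using a(1) fnP[OF a(3)] by simp
      ultimately have "a \<in> N' \<and> lo a \<le> i \<and> Suc i \<le> hi a \<and> e = {f a i, f a (Suc i)}" using aN by simp
      then show ?thesis by blast
    next
      case b
      have "Inr b \<in> T_sub_verts S pd v" "Inl (a, att b a) \<in> T_sub_verts S pd v" using eT b(1) by auto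
      then have vb: "v \<in> hverts S b" and va: "att b a < length (pd a)" "v \<in> pd a ! att b a"
        unfolding T_sub_verts_iff by auto
      have bN: "b \<in> N'" using vb b(3) N'iff by blast
      have "v \<in> hverts S a" using bag_sub[OF b(2,5) va(1)] va(2) by blast
      then have aN: "a \<in> N'" using b(2) N'iff by blast
      have "{a, b} \<in> {{y, par y} | y. y \<in> nodes S - {z}}" using b(6) unfolding rtE .
      then obtain u where u: "u \<in> nodes S - {z}" "{a, b} = {u, par u}" by blast
      have ab: "a \<noteq> b" using b(4,5) by auto
      from u(2) have cases: "(a = u \<and> b = par u) \<or> (a = par u \<and> b = u)" unfolding doubleton_eq_iff by blast
      then have uQ: "u \<in> Q'" using u(1) aN bN unfolding Q'_def by blast
      from cases show ?thesis
      proof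
        assume c: "a = u \<and> b = par u"
        have "at u = lo (par u)" unfolding at_def using c b(4) by simp
        then have "f (par u) (at u) = Inr b" using c fP[OF b(4)] by simp
        moreover have "cn u = att b a" unfolding cn_def using c b(4,5) by simp
        then have "f u (cn u) = Inl (a, att b a)" using c fnP[OF b(5)] by simp
        ultimately have "e = {f (par u) (at u), f u (cn u)}" using b(1) by simp
        then show ?thesis using uQ by blast
      next
        assume c: "a = par u \<and> b = u"
        have "at u = att b a" unfolding at_def using c b(4,5) by simp
        then have "f (par u) (at u) = Inl (a, att b a)" using c fnP[OF b(5)] by simp
        moreover have "cn u = lo u" unfolding cn_def using c b(4) by simp
        then have "f u (cn u) = Inr b" using c fP[OF b(4)] by simp
        ultimately have "e = {f (par u) (at u), f u (cn u)}" using b(1) by (simp add: insert_commute)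
        then show ?thesis using uQ by blast
      qed
    qed
  qed
  have tf: "tforest N' Q' par dep f lo hi at cn (T_edges S pd att)"
  proof (rule tforest.intro[OF fo], rule tforest_axioms.intro)
    show "\<And>s. s \<in> N' \<Longrightarrow> lo s \<le> hi s" by (rule lohi)
    show "\<And>s. s \<in> N' \<Longrightarrow> inj_on (f s) {lo s..hi s}" by (rule finj)
    show "\<And>s s' i i'. s \<in> N' \<Longrightarrow> s' \<in> N' \<Longrightarrow> i \<in> {lo s..hi s} \<Longrightarrow> i' \<in> {lo s'..hi s'} \<Longrightarrow> f s i = f s' i' \<Longrightarrow> s = s'"
      using fdisj by blast
    show "\<And>y. y \<in> Q' \<Longrightarrow> at y \<in> {lo (par y)..hi (par y)}" by (rule atin)
    show "\<And>y. y \<in> Q' \<Longrightarrow> cn y \<in> {lo y..hi y}" by (rule cnin)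
    show "\<And>e. e \<in> T_edges S pd att \<Longrightarrow> e \<subseteq> (\<Union>s\<in>N'. f s ` {lo s..hi s}) \<Longrightarrow>
       (\<exists>s i. s \<in> N' \<and> lo s \<le> i \<and> Suc i \<le> hi s \<and> e = {f s i, f s (Suc i)}) \<or>
       (\<exists>y\<in>Q'. e = {f (par y) (at y), f y (cn y)})" by (rule ecls)
  qed
  interpret tforest N' Q' par dep f lo hi at cn "T_edges S pd att" by (rule tf)
  have nD': "\<And>s. s \<in> N' \<Longrightarrow> \<not> Dn (Suc k) s" using nD hk by simp
  from whole[OF nD'] obtain n l r where W: "lay (FU N') n l r" "eok (T_edges S pd att) (FU N') l r"
    "\<forall>t<n. cnt (FU N') l r t \<le> 4*k+4" by blast
  have FUeq: "FU N' = T_sub_verts S pd v" unfolding FU_def F_def using XX by simp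
  have eok': "eok (T_sub_edges S pd att v) (T_sub_verts S pd v) l r"
    using W(2) unfolding FUeq eok_def T_sub_edges_def induced_edges_def by blast
  have sub': "\<forall>e\<in>T_sub_edges S pd att v. e \<subseteq> T_sub_verts S pd v"
    unfolding T_sub_edges_def induced_edges_def by blast
  obtain bs where bs: "is_path_decomp (T_sub_verts S pd v) (T_sub_edges S pd att v) bs" "pd_width bs \<le> 4*k+4 - 1"
    using lay_pd[OF W(1)[unfolded FUeq] eok' sub' W(3)[unfolded FUeq]] by blast
  have pw: "pathwidth (T_sub_verts S pd v) (T_sub_edges S pd att v) \<le> 4*k+3"
    using pathwidth_le[OF bs(1)] bs(2) by simp
  have "4 * h + 2 \<le> (2::nat) ^ (2 * h + 1)" by (rule pow_bound[OF assms(5)])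
  then have "4 * k + 3 \<le> (2::nat) ^ (2 * h + 1) - 3" using hk by simp
  then show False using pw assms(6) by simp
qed

end
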